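(* Fix $\varepsilon>0$ and $\lambda<\lambda_c$, and let $\pi_c=\lambda n^{-\eta_s}$. For distinct $i,j\in[n]$ let $f_{2k}(i,j)$ be the probability that there is a path of length $2k$ from $i$ to $j$ in $\mathrm{NR}_n(\mathbf w,\pi_c)$. There exist $n_0=n_0(\varepsilon)\ge1$ and $b=b(\varepsilon)\in(1/2,\alpha)$ such that for all $n\ge n_0$, all $k\ge1$ and all distinct $i,j\in[n]$, $$f_{2k}(i,j)\le(1+\varepsilon)^{2k}\Big(\frac{\lambda}{\lambda_c}\Big)^{2k}\frac{1}{(i\wedge j)^{1-b}(i\vee j)^{b}}.$$
   Context: Fix $\tau\in(2,3)$, $\alpha=1/(\tau-1)$, $\eta_s=(3-\tau)/2$, $\eta=(3-\tau)/(\tau-1)$. Let $F$ be a distribution function with $1-F(w)=Cw^{-(\tau-1)}$ on its support for some $C>0$, $\mu$ its mean, $w_i=[1-F]^{-1}(i/n)$, so $n^{-\alpha}w_i=c_{\mathrm F}i^{-\alpha}$; $\ell_n=\sum_iw_i$. $\mathrm{NR}_n(\mathbf w)$ on $[n]$ has edge $\{i,j\}$ independently with probability $1-e^{-w_iw_j/\ell_n}$; $\mathrm{NR}_n(\mathbf w,\pi)$ retains each edge independently with probability $\pi$. $A_\alpha=\int_0^\infty(1-e^{-z})z^{-1/\alpha}dz$, $B_\alpha=c_{\mathrm F}^{2/\alpha}A_\alpha/(\alpha\mu^{1/\alpha})$, $\lambda_c=\sqrt{\eta/(4B_\alpha)}$. *)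

theory Defs
  imports "HOL-Analysis.Analysis"
begin

definition alpha :: "real \<Rightarrow> real" where
  "alpha tau = 1 / (tau - 1)"

definition eta_s :: "real \<Rightarrow> real" where
  "eta_s tau = (3 - tau) / 2"

definition eta :: "real \<Rightarrow> real" where
  "eta tau = (3 - tau) / (tau - 1)"

definition paretoF :: "real \<Rightarrow> real \<Rightarrow> real \<Rightarrow> real" where
  "paretoF tau C x = (if x < C powr (alpha tau) then 0 else 1 - C * x powr (-(tau - 1)))"

text \<open>Mean of the nonnegative distribution F: integral of 1 - F over [0, infinity).\<close>
definition mu :: "real \<Rightarrow> real \<Rightarrow> real" where
  "mu tau C = integral {0..} (\<lambda>x. 1 - paretoF tau C x)"

text \<open>c_F: w_i = [1-F]^{-1}(i/n) = (C n / i)^alpha, i.e. n^{-alpha} w_i = c_F i^{-alpha}.\<close>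
definition cF :: "real \<Rightarrow> real \<Rightarrow> real" where
  "cF tau C = C powr (alpha tau)"

definition weight :: "real \<Rightarrow> real \<Rightarrow> nat \<Rightarrow> nat \<Rightarrow> real" where
  "weight tau C n i = cF tau C * real n powr (alpha tau) * real i powr (- alpha tau)"

definition ell :: "real \<Rightarrow> real \<Rightarrow> nat \<Rightarrow> real" where
  "ell tau C n = (\<Sum>i=1..n. weight tau C n i)"

definition A_alpha :: "real \<Rightarrow> real" where
  "A_alpha a = integral {0<..} (\<lambda>z. (1 - exp (- z)) * z powr (- (1 / a)))"

definition B_alpha :: "real \<Rightarrow> real \<Rightarrow> real" where
  "B_alpha tau C = cF tau C powr (2 / alpha tau) * A_alpha (alpha tau)
                    / (alpha tau * mu tau C powr (1 / alpha tau))"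

definition lambda_c :: "real \<Rightarrow> real \<Rightarrow> real" where
  "lambda_c tau C = sqrt (eta tau / (4 * B_alpha tau C))"

definition pairs :: "nat \<Rightarrow> (nat \<times> nat) set" where
  "pairs n = {(a, b). 1 \<le> a \<and> a < b \<and> b \<le> n}"

definition adj :: "(nat \<times> nat) set \<Rightarrow> nat \<Rightarrow> nat \<Rightarrow> bool" where
  "adj E a b \<longleftrightarrow> a \<noteq> b \<and> (min a b, max a b) \<in> E"

definition has_path :: "(nat \<times> nat) set \<Rightarrow> nat \<Rightarrow> nat \<Rightarrow> nat \<Rightarrow> bool" where
  "has_path E m i j \<longleftrightarrow> (\<exists>v :: nat \<Rightarrow> nat. v 0 = i \<and> v m = j \<and> inj_on v {0..m}
      \<and> (\<forall>t<m. adj E (v t) (v (Suc t))))"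

definition edge_prob :: "real \<Rightarrow> real \<Rightarrow> real \<Rightarrow> nat \<Rightarrow> nat \<times> nat \<Rightarrow> real" where
  "edge_prob tau C p n e = p * (1 - exp (- weight tau C n (fst e) * weight tau C n (snd e) / ell tau C n))"

text \<open>Probability of an event Q (a property of the edge set) in the random graph with
  independent edges, edge e present with probability q e.\<close>
definition graph_prob :: "((nat \<times> nat) \<Rightarrow> real) \<Rightarrow> nat \<Rightarrow> ((nat \<times> nat) set \<Rightarrow> bool) \<Rightarrow> real" where
  "graph_prob q n Q = (\<Sum>E\<in>Pow (pairs n). if Q E then
       (\<Prod>e\<in>E. q e) * (\<Prod>e\<in>pairs n - E. 1 - q e) else 0)"

definition path_prob :: "real \<Rightarrow> real \<Rightarrow> real \<Rightarrow> nat \<Rightarrow> nat \<Rightarrow> nat \<Rightarrow> nat \<Rightarrow> real" where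
  "path_prob tau C lam n m i j =
     graph_prob (edge_prob tau C (lam * real n powr (- eta_s tau)) n) n (\<lambda>E. has_path E m i j)"

end

theory Submission
  imports Defs
begin


lemma exp_tail_nn:
  fixes x :: real assumes "x \<ge> 0"
  shows "(\<integral>\<^sup>+t. ennreal (exp (- t)) * indicator {0<..<x} t \<partial>lborel) = ennreal (1 - exp (- x))"
proof -
  have "((\<lambda>t. exp (- t)) has_integral ((- exp (- x)) - (- exp (- 0)))) {0..x}"
    by (rule fundamental_theorem_of_calculus[OF assms])
       (auto intro!: derivative_eq_intros simp: has_real_derivative_iff_has_vector_derivative[symmetric])
  then have "((\<lambda>t. exp (- t)) has_integral (1 - exp (- x))) {0<..<x}"
    by (subst has_integral_spike_set_eq[where T="{0..x}"]) (auto intro: negligible_subset[of "{0,x}"])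
  from nn_integral_has_integral_lebesgue'[OF _ this] show ?thesis by simp
qed

lemma powr_from0_nn:
  fixes Y c :: real assumes "Y \<ge> 0" "c < 1"
  shows "(\<integral>\<^sup>+y. ennreal (y powr (-c)) * indicator {0<..<Y} y \<partial>lborel) = ennreal (Y powr (1 - c) / (1 - c))"
proof -
  have "((\<lambda>y. y powr (-c)) has_integral (Y powr (-c+1) / (-c+1))) {0..Y}"
    by (rule has_integral_powr_from_0) (use assms in auto)
  then have "((\<lambda>y. y powr (-c)) has_integral (Y powr (1-c) / (1-c))) {0<..<Y}"
    by (subst has_integral_spike_set_eq[where T="{0..Y}"]) (auto intro: negligible_subset[of "{0,Y}"] simp: add.commute)
  from nn_integral_has_integral_lebesgue'[OF _ this] show ?thesis by simp
qed

lemma powr_to_inf_nn: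
  fixes a e :: real assumes "e < -1" "a > 0"
  shows "(\<integral>\<^sup>+y. ennreal (y powr e) * indicator {a<..} y \<partial>lborel) = ennreal (-(a powr (e+1)) / (e+1))"
proof -
  have "((\<lambda>y. y powr e) has_integral (-(a powr (e+1)) / (e+1))) {a..}"
    by (rule has_integral_powr_to_inf) (use assms in auto)
  then have "((\<lambda>y. y powr e) has_integral (-(a powr (e+1)) / (e+1))) {a<..}"
    by (subst has_integral_spike_set_eq[where T="{a..}"]) (auto intro: negligible_subset[of "{a}"])
  from nn_integral_has_integral_lebesgue'[OF _ this] show ?thesis by simp
qed

lemma gamma_nn:
  fixes x :: real assumes "x > 0"
  shows "(\<integral>\<^sup>+t. ennreal (t powr (x - 1) * exp (- t)) * indicator {0<..} t \<partial>lborel) = ennreal (Gamma x)"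
proof -
  have "((\<lambda>t. t powr (x - 1) / exp t) has_integral Gamma x) {0..}"
    by (rule Gamma_integral_real[OF assms])
  then have "((\<lambda>t. t powr (x - 1) * exp (- t)) has_integral Gamma x) {0<..}"
    by (subst has_integral_spike_set_eq[where T="{0..}"]) (auto intro: negligible_subset[of "{0}"] simp: exp_minus field_simps)
  from nn_integral_has_integral_lebesgue'[OF _ this] show ?thesis by simp
qed



lemma ind_phi_meas[measurable]:
  fixes phi :: "real \<Rightarrow> real"
  assumes [measurable]: "phi \<in> borel_measurable borel"
  shows "(\<lambda>y. indicator {0<..<phi y} t :: ennreal) \<in> borel_measurable borel"
proof -
  have "(\<lambda>y. indicator {0<..<phi y} t :: ennreal) = (\<lambda>y. if 0 < t \<and> t < phi y then 1 else 0)"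
    by (auto simp: fun_eq_iff indicator_def)
  also have "\<dots> \<in> borel_measurable borel" by measurable
  finally show ?thesis .
qed

lemma tonelli_1mexp:
  fixes w phi :: "real \<Rightarrow> real"
  assumes [measurable]: "w \<in> borel_measurable borel" "phi \<in> borel_measurable borel"
    and phi0: "\<And>y. phi y \<ge> 0" and w0: "\<And>y. y > 0 \<Longrightarrow> w y \<ge> 0"
  shows "(\<integral>\<^sup>+y. ennreal (w y * (1 - exp (- phi y))) * indicator {0<..} y \<partial>lborel)
       = (\<integral>\<^sup>+t. ennreal (exp (- t)) * (\<integral>\<^sup>+y. ennreal (w y) * indicator {0<..} y * indicator {0<..<phi y} t \<partial>lborel) \<partial>lborel)"
proof -
  define f where "f = (\<lambda>(y::real) (t::real). ennreal (exp (- t)) * ennreal (w y) * indicator {0<..} y * indicator {0<..<phi y} t)"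
  have fm: "(\<lambda>(y,t). f y t) \<in> borel_measurable (lborel \<Otimes>\<^sub>M lborel)"
  proof -
    have "(\<lambda>(y,t). f y t) = (\<lambda>p. ennreal (exp (- snd p)) * ennreal (w (fst p)) * (if 0 < fst p \<and> 0 < snd p \<and> snd p < phi (fst p) then 1 else 0))"
      by (auto simp: f_def fun_eq_iff indicator_def)
    also have "\<dots> \<in> borel_measurable (lborel \<Otimes>\<^sub>M lborel)" by measurable
    finally show ?thesis .
  qed
  have "(\<integral>\<^sup>+y. ennreal (w y * (1 - exp (- phi y))) * indicator {0<..} y \<partial>lborel)
      = (\<integral>\<^sup>+y. (\<integral>\<^sup>+t. f y t \<partial>lborel) \<partial>lborel)"
  proof (rule nn_integral_cong)
    fix y :: real
    have "(\<integral>\<^sup>+t. f y t \<partial>lborel) = (\<integral>\<^sup>+t. (ennreal (exp (- t)) * indicator {0<..<phi y} t) * (ennreal (w y) * indicator {0<..} y) \<partial>lborel)"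
      by (rule nn_integral_cong) (simp add: f_def mult_ac)
    also have "\<dots> = (\<integral>\<^sup>+t. ennreal (exp (- t)) * indicator {0<..<phi y} t \<partial>lborel) * (ennreal (w y) * indicator {0<..} y)"
      by (rule nn_integral_multc) measurable
    also have "\<dots> = ennreal (1 - exp (- phi y)) * (ennreal (w y) * indicator {0<..} y)"
      by (simp add: exp_tail_nn phi0)
    also have "\<dots> = ennreal (w y * (1 - exp (- phi y))) * indicator {0<..} y"
      using w0[of y] phi0[of y] by (auto simp: indicator_def ennreal_mult' mult.commute)
    finally show "ennreal (w y * (1 - exp (- phi y))) * indicator {0<..} y = (\<integral>\<^sup>+t. f y t \<partial>lborel)" by simp
  qed
  also have "\<dots> = (\<integral>\<^sup>+t. (\<integral>\<^sup>+y. f y t \<partial>lborel) \<partial>lborel)"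
    by (rule lborel_pair.Fubini'[symmetric, OF fm])
  also have "\<dots> = (\<integral>\<^sup>+t. ennreal (exp (- t)) * (\<integral>\<^sup>+y. ennreal (w y) * indicator {0<..} y * indicator {0<..<phi y} t \<partial>lborel) \<partial>lborel)"
  proof (rule nn_integral_cong)
    fix t :: real
    show "(\<integral>\<^sup>+y. f y t \<partial>lborel) = ennreal (exp (- t)) * (\<integral>\<^sup>+y. ennreal (w y) * indicator {0<..} y * indicator {0<..<phi y} t \<partial>lborel)"
      unfolding f_def by (subst nn_integral_cmult[symmetric]) (auto simp: mult_ac)
  qed
  finally show ?thesis .
qed



lemma powr_less_iff_aux:
  fixes y t L al :: real
  assumes "y > 0" "t > 0" "L > 0" "al > 0"
  shows "t < L * y powr (- al) \<longleftrightarrow> y < (L / t) powr (1 / al)"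
proof -
  have "t < L * y powr (- al) \<longleftrightarrow> y powr al < L / t"
    using assms by (auto simp: powr_minus field_simps)
  also have "\<dots> \<longleftrightarrow> y < (L / t) powr (1 / al)"
  proof
    assume "y powr al < L / t"
    then have "(y powr al) powr (1/al) < (L / t) powr (1 / al)"
      using assms by (intro powr_less_mono2) auto
    then show "y < (L / t) powr (1 / al)" using assms by (simp add: powr_powr)
  next
    assume "y < (L / t) powr (1 / al)"
    then have "y powr al < ((L / t) powr (1 / al)) powr al"
      using assms by (intro powr_less_mono2) auto
    then show "y powr al < L / t" using assms by (simp add: powr_powr)
  qed
  finally show ?thesis .
qed

lemma I_formula:
  fixes L al c :: real
  assumes L: "L > 0" and al: "al > 0" and c: "c < 1" and s: "1 - c < al"
  shows "(\<integral>\<^sup>+y. ennreal (y powr (-c) * (1 - exp (- (L * y powr (- al))))) * indicator {0<..} y \<partial>lborel)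
       = ennreal (L powr ((1 - c) / al) * Gamma (1 - (1 - c) / al) / (1 - c))"
proof -
  define s where "s = (1 - c) / al"
  have s0: "0 < s" "s < 1" using c s al by (auto simp: s_def field_simps)
  have "(\<integral>\<^sup>+y. ennreal (y powr (-c) * (1 - exp (- (L * y powr (- al))))) * indicator {0<..} y \<partial>lborel)
      = (\<integral>\<^sup>+t. ennreal (exp (- t)) * (\<integral>\<^sup>+y. ennreal (y powr (-c)) * indicator {0<..} y * indicator {0<..<L * y powr (- al)} t \<partial>lborel) \<partial>lborel)"
    by (rule tonelli_1mexp) (use L in auto)
  also have "\<dots> = (\<integral>\<^sup>+t. ennreal (t powr ((1 - s) - 1) * exp (- t)) * indicator {0<..} t * ennreal (L powr s / (1 - c)) \<partial>lborel)"
  proof (rule nn_integral_cong)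
    fix t :: real
    show "ennreal (exp (- t)) * (\<integral>\<^sup>+y. ennreal (y powr (-c)) * indicator {0<..} y * indicator {0<..<L * y powr (- al)} t \<partial>lborel)
        = ennreal (t powr ((1 - s) - 1) * exp (- t)) * indicator {0<..} t * ennreal (L powr s / (1 - c))"
    proof (cases "t > 0")
      case True
      have "(\<integral>\<^sup>+y. ennreal (y powr (-c)) * indicator {0<..} y * indicator {0<..<L * y powr (- al)} t \<partial>lborel)
          = (\<integral>\<^sup>+y. ennreal (y powr (-c)) * indicator {0<..<(L / t) powr (1 / al)} y \<partial>lborel)"
        by (rule nn_integral_cong) (use True L al in \<open>auto simp: indicator_def powr_less_iff_aux\<close>)
      also have "\<dots> = ennreal (((L / t) powr (1 / al)) powr (1 - c) / (1 - c))"
        by (rule powr_from0_nn) (use c in auto)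
      also have "((L / t) powr (1 / al)) powr (1 - c) = (L / t) powr s"
        by (simp add: powr_powr s_def)
      also have "\<dots> = L powr s * t powr (- s)"
        using True L by (simp add: powr_divide powr_minus_divide)
      finally show ?thesis
        using True s0 c L
        by (simp add: ennreal_mult'[symmetric] mult_ac powr_minus divide_inverse)
    next
      case False
      then show ?thesis by (simp add: indicator_def)
    qed
  qed
  also have "\<dots> = (\<integral>\<^sup>+t. ennreal (t powr ((1 - s) - 1) * exp (- t)) * indicator {0<..} t \<partial>lborel) * ennreal (L powr s / (1 - c))"
    by (rule nn_integral_multc) measurable
  also have "\<dots> = ennreal (Gamma (1 - s)) * ennreal (L powr s / (1 - c))"
    by (subst gamma_nn) (use s0 in auto)
  also have "\<dots> = ennreal (L powr s * Gamma (1 - s) / (1 - c))"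
    using s0 c L by (simp add: ennreal_mult'[symmetric] Gamma_real_pos less_imp_le)
  finally show ?thesis by (simp add: s_def)
qed

lemma A_formula:
  fixes s :: real
  assumes s0: "0 < s" "s < 1"
  shows "(\<integral>\<^sup>+z. ennreal (z powr (-(s+1)) * (1 - exp (- z))) * indicator {0<..} z \<partial>lborel)
       = ennreal (Gamma (1 - s) / s)"
proof -
  have "(\<integral>\<^sup>+z. ennreal (z powr (-(s+1)) * (1 - exp (- z))) * indicator {0<..} z \<partial>lborel)
      = (\<integral>\<^sup>+t. ennreal (exp (- t)) * (\<integral>\<^sup>+z. ennreal (z powr (-(s+1))) * indicator {0<..} z * indicator {0<..<z} t \<partial>lborel) \<partial>lborel)"
    (is "?L = ?R")
  proof -
    have "?L = (\<integral>\<^sup>+z. ennreal (z powr (-(s+1)) * (1 - exp (- max 0 z))) * indicator {0<..} z \<partial>lborel)"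
      by (rule nn_integral_cong) (auto simp: indicator_def)
    also have "\<dots> = (\<integral>\<^sup>+t. ennreal (exp (- t)) * (\<integral>\<^sup>+z. ennreal (z powr (-(s+1))) * indicator {0<..} z * indicator {0<..<max 0 z} t \<partial>lborel) \<partial>lborel)"
      by (rule tonelli_1mexp) auto
    also have "\<dots> = ?R"
      by (intro nn_integral_cong arg_cong2[where f="(*)"] refl) (auto simp: indicator_def)
    finally show ?thesis .
  qed
  also have "\<dots> = (\<integral>\<^sup>+t. ennreal (t powr ((1 - s) - 1) * exp (- t)) * indicator {0<..} t * ennreal (1 / s) \<partial>lborel)"
  proof (rule nn_integral_cong)
    fix t :: real
    show "ennreal (exp (- t)) * (\<integral>\<^sup>+z. ennreal (z powr (-(s+1))) * indicator {0<..} z * indicator {0<..<z} t \<partial>lborel)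
        = ennreal (t powr ((1 - s) - 1) * exp (- t)) * indicator {0<..} t * ennreal (1 / s)"
    proof (cases "t > 0")
      case True
      have "(\<integral>\<^sup>+z. ennreal (z powr (-(s+1))) * indicator {0<..} z * indicator {0<..<z} t \<partial>lborel)
          = (\<integral>\<^sup>+z. ennreal (z powr (-(s+1))) * indicator {t<..} z \<partial>lborel)"
        by (rule nn_integral_cong) (use True in \<open>auto simp: indicator_def\<close>)
      also have "\<dots> = ennreal (-(t powr (-(s+1)+1)) / (-(s+1)+1))"
        by (rule powr_to_inf_nn) (use True s0 in auto)
      also have "-(t powr (-(s+1)+1)) / (-(s+1)+1) = t powr (-s) / s"
        using s0 by (simp add: field_simps)
      finally show ?thesis
        using True s0
        by (simp add: ennreal_mult'[symmetric] mult_ac divide_inverse)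
    next
      case False
      then show ?thesis by (simp add: indicator_def)
    qed
  qed
  also have "\<dots> = (\<integral>\<^sup>+t. ennreal (t powr ((1 - s) - 1) * exp (- t)) * indicator {0<..} t \<partial>lborel) * ennreal (1 / s)"
    by (rule nn_integral_multc) measurable
  also have "\<dots> = ennreal (Gamma (1 - s)) * ennreal (1 / s)"
    by (subst gamma_nn) (use s0 in auto)
  also have "\<dots> = ennreal (Gamma (1 - s) / s)"
    using s0 by (simp add: ennreal_mult'[symmetric] Gamma_real_pos less_imp_le)
  finally show ?thesis .
qed



lemma sum_ind_le:
  fixes y :: real
  shows "(\<Sum>m\<in>{1..n}. (indicator {real m - 1<..real m} y :: ennreal)) \<le> indicator {0<..} y"
proof (cases "y > 0")
  case True
  have "(\<Sum>m\<in>{1..n}. (indicator {real m - 1<..real m} y :: ennreal))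
      = (\<Sum>m\<in>{1..n}. if m = nat \<lceil>y\<rceil> then indicator {real m - 1<..real m} y else 0)"
  proof (rule sum.cong[OF refl])
    fix m assume "m \<in> {1..n}"
    show "(indicator {real m - 1<..real m} y :: ennreal) = (if m = nat \<lceil>y\<rceil> then indicator {real m - 1<..real m} y else 0)"
    proof (cases "real m - 1 < y \<and> y \<le> real m")
      case True
      then have "m = nat \<lceil>y\<rceil>" by linarith
      then show ?thesis by simp
    next
      case False then show ?thesis by (simp add: indicator_def)
    qed
  qed
  also have "\<dots> \<le> 1"
    by (subst sum.delta) (auto simp: indicator_def)
  finally show ?thesis using True by (simp add: indicator_def)
next
  case False
  then have "(\<Sum>m\<in>{1..n}. (indicator {real m - 1<..real m} y :: ennreal)) = 0"
    by (intro sum.neutral) (auto simp: indicator_def)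
  then show ?thesis by simp
qed

lemma sum_le_nn_integral:
  fixes F :: "real \<Rightarrow> real"
  assumes [measurable]: "F \<in> borel_measurable borel"
    and nonneg: "\<And>x. x > 0 \<Longrightarrow> F x \<ge> 0"
    and mono: "\<And>x y. 0 < x \<Longrightarrow> x \<le> y \<Longrightarrow> F y \<le> F x"
  shows "ennreal (\<Sum>m\<in>{1..n}. F (real m)) \<le> (\<integral>\<^sup>+y. ennreal (F y) * indicator {0<..} y \<partial>lborel)"
proof -
  have "ennreal (\<Sum>m\<in>{1..n}. F (real m)) = (\<Sum>m\<in>{1..n}. ennreal (F (real m)))"
    by (rule sum_ennreal[symmetric]) (auto intro: nonneg)
  also have "\<dots> = (\<Sum>m\<in>{1..n}. \<integral>\<^sup>+y. ennreal (F (real m)) * indicator {real m - 1<..real m} y \<partial>lborel)"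
    by (intro sum.cong refl) (simp add: nn_integral_cmult_indicator)
  also have "\<dots> \<le> (\<Sum>m\<in>{1..n}. \<integral>\<^sup>+y. ennreal (F y) * indicator {real m - 1<..real m} y \<partial>lborel)"
  proof (intro sum_mono nn_integral_mono)
    fix m y assume m: "m \<in> {1..n}"
    show "ennreal (F (real m)) * indicator {real m - 1<..real m} y \<le> ennreal (F y) * indicator {real m - 1<..real m} y"
    proof (cases "real m - 1 < y \<and> y \<le> real m")
      case True
      then have "y > 0" using m by auto
      then have "F (real m) \<le> F y" using True by (intro mono) auto
      then show ?thesis using True by (simp add: indicator_def ennreal_leI)
    qed (auto simp: indicator_def)
  qed
  also have "\<dots> = (\<integral>\<^sup>+y. (\<Sum>m\<in>{1..n}. ennreal (F y) * indicator {real m - 1<..real m} y) \<partial>lborel)"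
    by (rule nn_integral_sum[symmetric]) measurable
  also have "\<dots> \<le> (\<integral>\<^sup>+y. ennreal (F y) * indicator {0<..} y \<partial>lborel)"
  proof (rule nn_integral_mono)
    fix y :: real
    have "(\<Sum>m\<in>{1..n}. ennreal (F y) * indicator {real m - 1<..real m} y)
        = ennreal (F y) * (\<Sum>m\<in>{1..n}. indicator {real m - 1<..real m} y)"
      by (simp add: sum_distrib_left)
    also have "\<dots> \<le> ennreal (F y) * indicator {0<..} y"
      by (intro mult_left_mono sum_ind_le) auto
    finally show "(\<Sum>m\<in>{1..n}. ennreal (F y) * indicator {real m - 1<..real m} y) \<le> ennreal (F y) * indicator {0<..} y" .
  qed
  finally show ?thesis .
qed

definition gk :: "real \<Rightarrow> real \<Rightarrow> real \<Rightarrow> real" where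
  "gk ka al u = 1 - exp (- (ka * u powr (- al)))"

definition Ik :: "real \<Rightarrow> real \<Rightarrow> real \<Rightarrow> real" where
  "Ik ka al c = ka powr ((1 - c) / al) * Gamma (1 - (1 - c) / al) / (1 - c)"

lemma gk_nonneg: "ka \<ge> 0 \<Longrightarrow> gk ka al u \<ge> 0"
  unfolding gk_def by simp

lemma gk_le1: "gk ka al u \<le> 1"
  unfolding gk_def by simp

lemma gk_antimono:
  assumes "ka \<ge> 0" "al > 0" "0 < x" "x \<le> y"
  shows "gk ka al y \<le> gk ka al x"
proof -
  have "y powr (- al) \<le> x powr (- al)"
    using assms by (intro powr_mono2') auto
  then have "ka * y powr (- al) \<le> ka * x powr (- al)" using assms by (intro mult_left_mono) auto
  then show ?thesis unfolding gk_def by simp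
qed

lemma sum_bound:
  fixes ka al c l :: real
  assumes ka: "ka > 0" and al: "al > 0" and c: "0 \<le> c" "c < 1" "1 - c < al" and l: "l > 0"
  shows "(\<Sum>m\<in>{1..n}. real m powr (-c) * gk ka al (l * real m)) \<le> l powr (c - 1) * Ik ka al c"
proof -
  define L where "L = ka * l powr (- al)"
  have L: "L > 0" using ka l by (simp add: L_def)
  define F where "F = (\<lambda>y::real. y powr (-c) * (1 - exp (- (L * y powr (- al)))))"
  have Feq: "F y = y powr (-c) * gk ka al (l * y)" if "y > 0" for y
    using that l by (simp add: F_def gk_def L_def powr_mult mult_ac)
  have "ennreal (\<Sum>m\<in>{1..n}. F (real m)) \<le> (\<integral>\<^sup>+y. ennreal (F y) * indicator {0<..} y \<partial>lborel)"
  proof (rule sum_le_nn_integral)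
    show "F \<in> borel_measurable borel" unfolding F_def by measurable
    show "\<And>x. 0 < x \<Longrightarrow> 0 \<le> F x" unfolding F_def using L by simp
    fix x y :: real assume xy: "0 < x" "x \<le> y"
    have "F y = y powr (-c) * gk L al y" "F x = x powr (-c) * gk L al x"
      by (simp_all add: F_def gk_def)
    moreover have "y powr (-c) \<le> x powr (-c)" using xy c by (intro powr_mono2') auto
    moreover have "gk L al y \<le> gk L al x" using xy L al by (intro gk_antimono) auto
    ultimately show "F y \<le> F x"
      using L by (auto intro!: mult_mono gk_nonneg)
  qed
  also have "\<dots> = ennreal (L powr ((1 - c) / al) * Gamma (1 - (1 - c) / al) / (1 - c))"
    unfolding F_def by (rule I_formula) (use L al c in auto)
  finally have "(\<Sum>m\<in>{1..n}. F (real m)) \<le> L powr ((1 - c) / al) * Gamma (1 - (1 - c) / al) / (1 - c)"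
    using c al by (subst (asm) ennreal_le_iff) (auto intro!: divide_nonneg_pos mult_nonneg_nonneg Gamma_real_nonneg simp: field_simps)
  also have "L powr ((1 - c) / al) = l powr (c - 1) * ka powr ((1 - c) / al)"
  proof -
    have e: "- al * ((1 - c) / al) = c - 1" using al by (simp add: field_simps)
    show ?thesis using ka l al by (simp add: L_def powr_mult powr_powr e mult.commute)
  qed
  finally show ?thesis
    by (subst (asm) sum.cong[OF refl Feq]) (auto simp: Ik_def mult_ac)
qed



lemma gk_pow_bound:
  assumes ka: "ka > 0" and al: "al > 0" and b: "0 \<le> b" "b \<le> al" and u: "u > 0"
  shows "gk ka al u \<le> ka powr (b / al) * u powr (- b)"
proof -
  define x where "x = ka * u powr (- al)"
  have x: "x > 0" using ka u by (simp add: x_def)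
  have th: "0 \<le> b / al" "b / al \<le> 1" using b al by auto
  have "gk ka al u = 1 - exp (- x)" by (simp add: gk_def x_def)
  also have "\<dots> \<le> x powr (b / al)"
  proof (cases "x \<ge> 1")
    case True
    have "1 - exp (- x) \<le> 1" by simp
    also have "1 \<le> x powr (b / al)" using True th by (intro ge_one_powr_ge_zero) auto
    finally show ?thesis .
  next
    case False
    have "1 - exp (- x) \<le> x" using exp_ge_add_one_self[of "- x"] by simp
    also have "x = x powr 1" using x by simp
    also have "x powr 1 \<le> x powr (b / al)" using False x th by (intro powr_mono') auto
    finally show ?thesis .
  qed
  also have "x powr (b / al) = ka powr (b / al) * u powr (- b)"
    using ka u al by (simp add: x_def powr_mult powr_powr)
  finally show ?thesis .
qed

definition Qk :: "nat \<Rightarrow> (nat \<Rightarrow> nat \<Rightarrow> real) \<Rightarrow> nat \<Rightarrow> nat \<Rightarrow> real" where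
  "Qk n p i m = (\<Sum>l\<in>{1..n}. p i l * p l m)"

lemma QK_bound:
  fixes p :: "nat \<Rightarrow> nat \<Rightarrow> real"
  assumes p: "\<And>a c. a \<in> {1..n} \<Longrightarrow> c \<in> {1..n} \<Longrightarrow> 0 \<le> p a c \<and> p a c \<le> pr * gk ka al (real a * real c)"
    and pr: "pr \<ge> 0" and ka: "ka > 0" and al: "al > 0"
    and c: "0 < c" "c < 1" "1 - c < al" "c < al" and i: "i \<in> {1..n}"
  shows "(\<Sum>m\<in>{1..n}. Qk n p i m * real m powr (-c)) \<le> pr^2 * Ik ka al c * Ik ka al (1 - c) * real i powr (-c)"
proof -
  have Ik0: "Ik ka al c' \<ge> 0" if "c' < 1" "1 - c' < al" for c'
    using that al ka by (auto simp: Ik_def intro!: divide_nonneg_pos mult_nonneg_nonneg Gamma_real_nonneg simp: field_simps)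
  have inner: "(\<Sum>m\<in>{1..n}. p l m * real m powr (-c)) \<le> pr * (real l powr (c - 1) * Ik ka al c)" if l: "l \<in> {1..n}" for l
  proof -
    have "(\<Sum>m\<in>{1..n}. p l m * real m powr (-c)) \<le> (\<Sum>m\<in>{1..n}. pr * (real m powr (-c) * gk ka al (real l * real m)))"
      by (intro sum_mono) (use p[OF l] in \<open>auto intro: mult_right_mono simp: mult_ac\<close>)
    also have "\<dots> = pr * (\<Sum>m\<in>{1..n}. real m powr (-c) * gk ka al (real l * real m))"
      by (simp add: sum_distrib_left)
    also have "\<dots> \<le> pr * (real l powr (c - 1) * Ik ka al c)"
      using l c by (intro mult_left_mono sum_bound ka al pr) auto
    finally show ?thesis .
  qed
  have "(\<Sum>m\<in>{1..n}. Qk n p i m * real m powr (-c)) = (\<Sum>l\<in>{1..n}. p i l * (\<Sum>m\<in>{1..n}. p l m * real m powr (-c)))"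
    unfolding Qk_def sum_distrib_right sum_distrib_left
    by (subst sum.swap) (simp add: mult_ac)
  also have "\<dots> \<le> (\<Sum>l\<in>{1..n}. (pr * gk ka al (real i * real l)) * (pr * (real l powr (c - 1) * Ik ka al c)))"
  proof (intro sum_mono mult_mono)
    fix l assume l: "l \<in> {1..n}"
    show "p i l \<le> pr * gk ka al (real i * real l)" using p[OF i l] by auto
    show "(\<Sum>m\<in>{1..n}. p l m * real m powr (-c)) \<le> pr * (real l powr (c - 1) * Ik ka al c)" by (rule inner[OF l])
    show "0 \<le> pr * gk ka al (real i * real l)" using pr ka by (simp add: gk_nonneg)
    show "0 \<le> (\<Sum>m\<in>{1..n}. p l m * real m powr (-c))" using p l by (intro sum_nonneg) auto
  qed
  also have "\<dots> = pr^2 * Ik ka al c * (\<Sum>l\<in>{1..n}. real l powr (- (1 - c)) * gk ka al (real i * real l))"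
    by (simp add: sum_distrib_left power2_eq_square mult_ac)
  also have "\<dots> \<le> pr^2 * Ik ka al c * (real i powr ((1 - c) - 1) * Ik ka al (1 - c))"
    using c i by (intro mult_left_mono sum_bound ka al Ik0 mult_nonneg_nonneg) auto
  finally show ?thesis by (simp add: mult_ac)
qed

lemma Q_base:
  fixes p :: "nat \<Rightarrow> nat \<Rightarrow> real"
  assumes p: "\<And>a c. a \<in> {1..n} \<Longrightarrow> c \<in> {1..n} \<Longrightarrow> 0 \<le> p a c \<and> p a c \<le> pr * gk ka al (real a * real c)"
    and pr: "pr \<ge> 0" and ka: "ka > 0" and al: "al > 0"
    and b: "0 < b" "b < 1" "1 - b < al" "b \<le> al" and i: "i \<in> {1..n}" and j: "j \<in> {1..n}"
  shows "Qk n p i j \<le> pr^2 * ka powr (b / al) * Ik ka al b * (real i powr (-b) * real j powr (b - 1))"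
    and "Qk n p i j \<le> pr^2 * ka powr (b / al) * Ik ka al b * (real i powr (b - 1) * real j powr (-b))"
proof -
  have gb: "gk ka al (real a * real c) \<le> ka powr (b / al) * (real a powr (-b) * real c powr (-b))"
    if "a \<in> {1..n}" "c \<in> {1..n}" for a c
    using gk_pow_bound[OF ka al _ b(4), of "real a * real c"] b that by (auto simp: powr_mult)
  have "Qk n p i j \<le> (\<Sum>l\<in>{1..n}. (pr * (ka powr (b / al) * (real i powr (-b) * real l powr (-b)))) * (pr * gk ka al (real j * real l)))"
    unfolding Qk_def
  proof (intro sum_mono mult_mono)
    fix l assume l: "l \<in> {1..n}"
    show "p i l \<le> pr * (ka powr (b / al) * (real i powr (-b) * real l powr (-b)))"
      using p[OF i l] gb[OF i l] pr by (meson mult_left_mono order_trans)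
    show "p l j \<le> pr * gk ka al (real j * real l)" using p[OF l j] by (auto simp: mult.commute)
    show "0 \<le> pr * (ka powr (b / al) * (real i powr (-b) * real l powr (-b)))" using pr by simp
    show "0 \<le> p l j" using p[OF l j] by auto
  qed
  also have "\<dots> = pr^2 * ka powr (b / al) * real i powr (-b) * (\<Sum>l\<in>{1..n}. real l powr (-b) * gk ka al (real j * real l))"
    by (simp add: sum_distrib_left power2_eq_square mult_ac)
  also have "\<dots> \<le> pr^2 * ka powr (b / al) * real i powr (-b) * (real j powr (b - 1) * Ik ka al b)"
    using b j by (intro mult_left_mono sum_bound ka al) auto
  finally show "Qk n p i j \<le> pr^2 * ka powr (b / al) * Ik ka al b * (real i powr (-b) * real j powr (b - 1))"
    by (simp add: mult_ac)
  have "Qk n p i j \<le> (\<Sum>l\<in>{1..n}. (pr * gk ka al (real i * real l)) * (pr * (ka powr (b / al) * (real l powr (-b) * real j powr (-b)))))"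
    unfolding Qk_def
  proof (intro sum_mono mult_mono)
    fix l assume l: "l \<in> {1..n}"
    show "p l j \<le> pr * (ka powr (b / al) * (real l powr (-b) * real j powr (-b)))"
      using p[OF l j] gb[OF l j] pr by (meson mult_left_mono order_trans)
    show "p i l \<le> pr * gk ka al (real i * real l)" using p[OF i l] by auto
    show "0 \<le> pr * gk ka al (real i * real l)" using pr ka by (simp add: gk_nonneg)
    show "0 \<le> p l j" using p[OF l j] by auto
  qed
  also have "\<dots> = pr^2 * ka powr (b / al) * real j powr (-b) * (\<Sum>l\<in>{1..n}. real l powr (-b) * gk ka al (real i * real l))"
    by (simp add: sum_distrib_left power2_eq_square mult_ac)
  also have "\<dots> \<le> pr^2 * ka powr (b / al) * real j powr (-b) * (real i powr (b - 1) * Ik ka al b)"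
    using b i by (intro mult_left_mono sum_bound ka al) auto
  finally show "Qk n p i j \<le> pr^2 * ka powr (b / al) * Ik ka al b * (real i powr (b - 1) * real j powr (-b))"
    by (simp add: mult_ac)
qed



fun wt :: "(nat \<Rightarrow> nat \<Rightarrow> real) \<Rightarrow> nat list \<Rightarrow> real" where
  "wt p (a # b # r) = p a b * wt p (b # r)"
| "wt p _ = 1"

definition Ls :: "nat \<Rightarrow> nat \<Rightarrow> nat list set" where
  "Ls n m = {xs. length xs = m \<and> set xs \<subseteq> {1..n}}"

definition WS :: "nat \<Rightarrow> (nat \<Rightarrow> nat \<Rightarrow> real) \<Rightarrow> nat \<Rightarrow> nat \<Rightarrow> nat \<Rightarrow> real" where
  "WS n p m i j = (\<Sum>xs\<in>Ls n m. if last (i # xs) = j then wt p (i # xs) else 0)"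

lemma finite_Ls: "finite (Ls n m)"
  using finite_lists_length_eq[of "{1..n}" m] unfolding Ls_def by (simp add: conj_commute)

lemma Ls_Suc: "Ls n (Suc m) = (\<lambda>(l, ys). l # ys) ` ({1..n} \<times> Ls n m)"
proof
  show "Ls n (Suc m) \<subseteq> (\<lambda>(l, ys). l # ys) ` ({1..n} \<times> Ls n m)"
  proof
    fix xs assume "xs \<in> Ls n (Suc m)"
    then obtain l ys where "xs = l # ys" "length ys = m" "set (l # ys) \<subseteq> {1..n}"
      unfolding Ls_def by (cases xs) auto
    then show "xs \<in> (\<lambda>(l, ys). l # ys) ` ({1..n} \<times> Ls n m)"
      unfolding Ls_def by (auto intro!: image_eqI[of _ _ "(l, ys)"])
  qed
qed (auto simp: Ls_def)

lemma Ls_0: "Ls n 0 = {[]}"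
  by (auto simp: Ls_def)

lemma WS_0: "WS n p 0 i j = (if i = j then 1 else 0)"
  by (simp add: WS_def Ls_0)

lemma WS_Suc: "WS n p (Suc m) i j = (\<Sum>l\<in>{1..n}. p i l * WS n p m l j)"
proof -
  have inj: "inj_on (\<lambda>(l, ys). l # ys) ({1..n} \<times> Ls n m)"
    by (auto simp: inj_on_def)
  have "WS n p (Suc m) i j = (\<Sum>(l, ys)\<in>{1..n} \<times> Ls n m. if last (i # l # ys) = j then wt p (i # l # ys) else 0)"
    unfolding WS_def Ls_Suc by (subst sum.reindex[OF inj]) (simp add: case_prod_unfold)
  also have "\<dots> = (\<Sum>l\<in>{1..n}. \<Sum>ys\<in>Ls n m. p i l * (if last (l # ys) = j then wt p (l # ys) else 0))"
    by (subst sum.cartesian_product[symmetric]) (auto intro!: sum.cong)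
  also have "\<dots> = (\<Sum>l\<in>{1..n}. p i l * WS n p m l j)"
    by (simp add: WS_def sum_distrib_left)
  finally show ?thesis .
qed

lemma WS_SS: "WS n p (Suc (Suc m)) i j = (\<Sum>m'\<in>{1..n}. Qk n p i m' * WS n p m m' j)"
  unfolding WS_Suc Qk_def sum_distrib_left sum_distrib_right
  by (subst sum.swap) (simp add: mult_ac)

lemma WS_2: "j \<in> {1..n} \<Longrightarrow> WS n p 2 i j = Qk n p i j"
  by (simp add: numeral_2_eq_2 WS_SS WS_0 if_distrib cong: if_cong)

lemma Qk_nonneg:
  assumes "\<And>a c. a \<in> {1..n} \<Longrightarrow> c \<in> {1..n} \<Longrightarrow> 0 \<le> p a c"
  shows "i \<in> {1..n} \<Longrightarrow> m \<in> {1..n} \<Longrightarrow> 0 \<le> Qk n p i m"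
  unfolding Qk_def using assms by (auto intro!: sum_nonneg)

lemma WS_bound:
  fixes p :: "nat \<Rightarrow> nat \<Rightarrow> real"
  assumes p: "\<And>a c. a \<in> {1..n} \<Longrightarrow> c \<in> {1..n} \<Longrightarrow> 0 \<le> p a c \<and> p a c \<le> pr * gk ka al (real a * real c)"
    and pr: "pr \<ge> 0" and ka: "ka > 0" and al: "al > 0"
    and b: "0 < b" "b < 1" "1 - b < al" "b < al"
  defines "C0 \<equiv> pr^2 * ka powr (b / al) * Ik ka al b"
    and "Mp \<equiv> pr^2 * Ik ka al b * Ik ka al (1 - b)"
  shows "\<forall>i\<in>{1..n}. \<forall>j\<in>{1..n}.
           WS n p (2 * Suc k) i j \<le> C0 * Mp ^ k * (real i powr (-b) * real j powr (b - 1))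
         \<and> WS n p (2 * Suc k) i j \<le> C0 * Mp ^ k * (real i powr (b - 1) * real j powr (-b))"
proof (induction k)
  case 0
  show ?case
    using Q_base[OF p pr ka al b(1-3) less_imp_le[OF b(4)]] by (simp add: WS_2 C0_def)
next
  case (Suc k)
  have Qn: "0 \<le> Qk n p i m" if "i \<in> {1..n}" "m \<in> {1..n}" for i m
    using Qk_nonneg[of n p] p that by blast
  have C0: "C0 * Mp ^ k \<ge> 0"
    using pr ka al b by (auto simp: C0_def Mp_def Ik_def intro!: mult_nonneg_nonneg divide_nonneg_pos Gamma_real_nonneg simp: field_simps)
  show ?case
  proof (intro ballI conjI)
    fix i j assume i: "i \<in> {1..n}" and j: "j \<in> {1..n}"
    have eq: "WS n p (2 * Suc (Suc k)) i j = (\<Sum>m\<in>{1..n}. Qk n p i m * WS n p (2 * Suc k) m j)"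
    proof -
      have "2 * Suc (Suc k) = Suc (Suc (2 * Suc k))" by simp
      then show ?thesis by (simp only: WS_SS)
    qed
    have "WS n p (2 * Suc (Suc k)) i j \<le> (\<Sum>m\<in>{1..n}. Qk n p i m * (C0 * Mp ^ k * (real m powr (-b) * real j powr (b - 1))))"
      unfolding eq using Suc.IH i j by (intro sum_mono mult_left_mono Qn) auto
    also have "\<dots> = C0 * Mp ^ k * real j powr (b - 1) * (\<Sum>m\<in>{1..n}. Qk n p i m * real m powr (-b))"
      by (simp add: sum_distrib_left mult_ac)
    also have "\<dots> \<le> C0 * Mp ^ k * real j powr (b - 1) * (pr^2 * Ik ka al b * Ik ka al (1 - b) * real i powr (-b))"
      using b i by (intro mult_left_mono QK_bound[OF p pr ka al] mult_nonneg_nonneg C0) auto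
    finally show "WS n p (2 * Suc (Suc k)) i j \<le> C0 * Mp ^ Suc k * (real i powr (-b) * real j powr (b - 1))"
      by (simp add: Mp_def mult_ac)
    have "WS n p (2 * Suc (Suc k)) i j \<le> (\<Sum>m\<in>{1..n}. Qk n p i m * (C0 * Mp ^ k * (real m powr (- (1 - b)) * real j powr (-b))))"
      unfolding eq using Suc.IH i j by (intro sum_mono mult_left_mono Qn) auto
    also have "\<dots> = C0 * Mp ^ k * real j powr (-b) * (\<Sum>m\<in>{1..n}. Qk n p i m * real m powr (- (1 - b)))"
      by (simp add: sum_distrib_left mult_ac)
    also have "\<dots> \<le> C0 * Mp ^ k * real j powr (-b) * (pr^2 * Ik ka al (1 - b) * Ik ka al (1 - (1 - b)) * real i powr (- (1 - b)))"
      using b i by (intro mult_left_mono QK_bound[OF p pr ka al] mult_nonneg_nonneg C0) auto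
    finally show "WS n p (2 * Suc (Suc k)) i j \<le> C0 * Mp ^ Suc k * (real i powr (b - 1) * real j powr (-b))"
      by (simp add: Mp_def mult_ac)
  qed
qed



fun edges :: "nat list \<Rightarrow> (nat \<times> nat) set" where
  "edges (a # b # r) = insert (min a b, max a b) (edges (b # r))"
| "edges _ = {}"

lemma edges_mem: "(x, y) \<in> edges xs \<Longrightarrow> x \<in> set xs \<and> y \<in> set xs"
  by (induction xs rule: edges.induct) (auto simp: min_def max_def split: if_splits)

lemma finite_edges: "finite (edges xs)"
  by (induction xs rule: edges.induct) auto

lemma prod_edges:
  "distinct xs \<Longrightarrow> (\<Prod>e\<in>edges xs. q e) = wt (\<lambda>a b. q (min a b, max a b)) xs"
proof (induction xs rule: edges.induct)
  case (1 a b r)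
  have "(min a b, max a b) \<notin> edges (b # r)"
  proof
    assume "(min a b, max a b) \<in> edges (b # r)"
    from edges_mem[OF this] have "a \<in> set (b # r)" by (auto simp: min_def max_def split: if_splits)
    with "1.prems" show False by simp
  qed
  then show ?case using "1" by (simp add: finite_edges)
qed auto

lemma edges_pairs:
  "distinct xs \<Longrightarrow> set xs \<subseteq> {1..n} \<Longrightarrow> edges xs \<subseteq> pairs n"
  by (induction xs rule: edges.induct) (auto simp: pairs_def min_def max_def)

lemma finite_pairs: "finite (pairs n)"
  by (rule finite_subset[of _ "{1..n} \<times> {1..n}"]) (auto simp: pairs_def)

lemma gp_weight_nonneg:
  fixes q :: "nat \<times> nat \<Rightarrow> real"
  assumes "\<And>e. 0 \<le> q e \<and> q e \<le> 1"
  shows "0 \<le> (\<Prod>e\<in>E. q e) * (\<Prod>e\<in>U - E. 1 - q e)"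
proof -
  have "0 \<le> prod q E" by (rule prod_nonneg) (use assms in blast)
  moreover have "0 \<le> (\<Prod>e\<in>U - E. 1 - q e)" by (rule prod_nonneg) (use assms in force)
  ultimately show ?thesis by simp
qed

lemma gp_superset:
  assumes S: "S \<subseteq> pairs n"
  shows "graph_prob q n (\<lambda>E. S \<subseteq> E) = (\<Prod>e\<in>S. q e)"
proof -
  let ?U = "pairs n"
  have fU: "finite ?U" by (rule finite_pairs)
  have fS: "finite S" using S fU by (rule finite_subset)
  have "graph_prob q n (\<lambda>E. S \<subseteq> E) = (\<Sum>E\<in>{E\<in>Pow ?U. S \<subseteq> E}. (\<Prod>e\<in>E. q e) * (\<Prod>e\<in>?U - E. 1 - q e))"
    unfolding graph_prob_def by (subst sum.inter_filter[symmetric]) (auto simp: fU)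
  also have "{E\<in>Pow ?U. S \<subseteq> E} = (\<lambda>F. S \<union> F) ` Pow (?U - S)"
  proof
    show "{E\<in>Pow ?U. S \<subseteq> E} \<subseteq> (\<lambda>F. S \<union> F) ` Pow (?U - S)"
    proof
      fix E assume "E \<in> {E\<in>Pow ?U. S \<subseteq> E}"
      then show "E \<in> (\<lambda>F. S \<union> F) ` Pow (?U - S)"
        by (intro image_eqI[of _ _ "E - S"]) auto
    qed
  qed (use S in auto)
  also have "(\<Sum>E\<in>(\<lambda>F. S \<union> F) ` Pow (?U - S). (\<Prod>e\<in>E. q e) * (\<Prod>e\<in>?U - E. 1 - q e))
      = (\<Sum>F\<in>Pow (?U - S). (\<Prod>e\<in>S \<union> F. q e) * (\<Prod>e\<in>?U - (S \<union> F). 1 - q e))"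
    by (subst sum.reindex) (auto simp: inj_on_def)
  also have "\<dots> = (\<Sum>F\<in>Pow (?U - S). (\<Prod>e\<in>S. q e) * ((\<Prod>e\<in>F. q e) * (\<Prod>e\<in>(?U - S) - F. 1 - q e)))"
  proof (rule sum.cong[OF refl])
    fix F assume F: "F \<in> Pow (?U - S)"
    then have fF: "finite F" using fU by (auto intro: finite_subset)
    have "(\<Prod>e\<in>S \<union> F. q e) = (\<Prod>e\<in>S. q e) * (\<Prod>e\<in>F. q e)"
      using F fS fF by (subst prod.union_disjoint) auto
    moreover have "?U - (S \<union> F) = (?U - S) - F" by auto
    ultimately show "(\<Prod>e\<in>S \<union> F. q e) * (\<Prod>e\<in>?U - (S \<union> F). 1 - q e)
        = (\<Prod>e\<in>S. q e) * ((\<Prod>e\<in>F. q e) * (\<Prod>e\<in>(?U - S) - F. 1 - q e))" by simp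
  qed
  also have "\<dots> = (\<Prod>e\<in>S. q e) * (\<Prod>e\<in>?U - S. q e + (1 - q e))"
    by (subst prod_add) (auto simp: fU sum_distrib_left)
  also have "\<dots> = (\<Prod>e\<in>S. q e)" by simp
  finally show ?thesis .
qed

lemma gp_union:
  assumes q: "\<And>e. 0 \<le> q e \<and> q e \<le> 1" and X: "finite X"
    and cov: "\<And>E. E \<subseteq> pairs n \<Longrightarrow> Q E \<Longrightarrow> \<exists>x\<in>X. R x E"
  shows "graph_prob q n Q \<le> (\<Sum>x\<in>X. graph_prob q n (R x))"
proof -
  let ?w = "\<lambda>E. (\<Prod>e\<in>E. q e) * (\<Prod>e\<in>pairs n - E. 1 - q e)"
  have "graph_prob q n Q \<le> (\<Sum>E\<in>Pow (pairs n). \<Sum>x\<in>X. if R x E then ?w E else 0)"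
    unfolding graph_prob_def
  proof (rule sum_mono)
    fix E assume E: "E \<in> Pow (pairs n)"
    have w0: "0 \<le> ?w E" by (rule gp_weight_nonneg[OF q])
    show "(if Q E then ?w E else 0) \<le> (\<Sum>x\<in>X. if R x E then ?w E else 0)"
    proof (cases "Q E")
      case True
      then obtain x where x: "x \<in> X" "R x E" using cov E by auto
      have "?w E = (if R x E then ?w E else 0)" using x by simp
      also have "\<dots> \<le> (\<Sum>x\<in>X. if R x E then ?w E else 0)"
        by (rule member_le_sum) (use x X w0 in auto)
      finally show ?thesis using True by simp
    next
      case False
      then show ?thesis using w0 by (auto intro!: sum_nonneg)
    qed
  qed
  also have "\<dots> = (\<Sum>x\<in>X. graph_prob q n (R x))"
    unfolding graph_prob_def by (rule sum.swap)
  finally show ?thesis .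
qed

lemma edges_map_upt:
  assumes "\<And>t. s \<le> t \<Longrightarrow> t < s + m \<Longrightarrow> (min (v t) (v (Suc t)), max (v t) (v (Suc t))) \<in> E"
  shows "edges (map v [s..<Suc (s + m)]) \<subseteq> E"
  using assms
proof (induction m arbitrary: s)
  case 0
  then show ?case by simp
next
  case (Suc m)
  have eq: "map v [s..<Suc (s + Suc m)] = v s # map v [Suc s..<Suc (Suc s + m)]"
    by (simp del: upt_Suc add: upt_conv_Cons)
  obtain rest where eq2: "map v [Suc s..<Suc (Suc s + m)] = v (Suc s) # rest"
    by (simp del: upt_Suc add: upt_conv_Cons)
  have "edges (map v [Suc s..<Suc (Suc s + m)]) \<subseteq> E"
    by (rule Suc.IH) (use Suc.prems in auto)
  moreover have "(min (v s) (v (Suc s)), max (v s) (v (Suc s))) \<in> E" using Suc.prems by auto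
  ultimately show ?case unfolding eq eq2 by simp
qed

lemma has_path_list:
  assumes E: "E \<subseteq> pairs n" and hp: "has_path E m i j" and m: "m \<ge> 1"
  shows "\<exists>xs\<in>Ls n m. distinct (i # xs) \<and> last (i # xs) = j \<and> edges (i # xs) \<subseteq> E"
proof -
  obtain v where v0: "v 0 = i" and vm: "v m = j" and inj: "inj_on v {0..m}"
    and ad: "\<forall>t<m. adj E (v t) (v (Suc t))"
    using hp unfolding has_path_def by blast
  define xs where "xs = map v [1..<Suc m]"
  have ixs: "i # xs = map v [0..<Suc m]"
    unfolding xs_def using v0 by (simp del: upt_Suc add: upt_conv_Cons)
  have edge: "(min (v t) (v (Suc t)), max (v t) (v (Suc t))) \<in> E" if "t < m" for t
    using ad that unfolding adj_def by auto
  have "set xs \<subseteq> {1..n}"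
  proof
    fix x assume "x \<in> set xs"
    then obtain t where t: "1 \<le> t" "t < Suc m" "x = v t" unfolding xs_def by auto
    then obtain t' where t': "t = Suc t'" "t' < m" by (cases t) auto
    have "(min (v t') (v t), max (v t') (v t)) \<in> pairs n" using edge[OF t'(2)] E t' by auto
    then show "x \<in> {1..n}" using t by (auto simp: pairs_def min_def max_def split: if_splits)
  qed
  moreover have "length xs = m" by (simp add: xs_def)
  moreover have "distinct (i # xs)"
    unfolding ixs distinct_map using inj by (simp del: upt_Suc add: atLeastLessThanSuc_atLeastAtMost)
  moreover have "last (i # xs) = j"
    unfolding ixs using vm by (simp del: upt_Suc add: last_map)
  moreover have "edges (i # xs) \<subseteq> E"
    unfolding ixs using edges_map_upt[of 0 m v E] edge by simp
  ultimately show ?thesis unfolding Ls_def by blast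
qed

lemma wt_nonneg: "(\<And>a b. 0 \<le> p a b) \<Longrightarrow> 0 \<le> wt p xs"
  by (induction p xs rule: wt.induct) auto

lemma path_prob_le_WS:
  assumes q: "\<And>e. 0 \<le> q e \<and> q e \<le> 1" and i: "i \<in> {1..n}" and m: "m \<ge> 1"
  shows "graph_prob q n (\<lambda>E. has_path E m i j) \<le> WS n (\<lambda>a b. q (min a b, max a b)) m i j"
proof -
  let ?p = "\<lambda>a b. q (min a b, max a b)"
  define X where "X = {xs\<in>Ls n m. distinct (i # xs) \<and> last (i # xs) = j}"
  have fX: "finite X" unfolding X_def using finite_Ls by auto
  have "graph_prob q n (\<lambda>E. has_path E m i j) \<le> (\<Sum>xs\<in>X. graph_prob q n (\<lambda>E. edges (i # xs) \<subseteq> E))"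
  proof (rule gp_union[OF q fX])
    fix E assume "E \<subseteq> pairs n" "has_path E m i j"
    from has_path_list[OF this m] show "\<exists>xs\<in>X. edges (i # xs) \<subseteq> E" unfolding X_def by blast
  qed
  also have "\<dots> = (\<Sum>xs\<in>X. wt ?p (i # xs))"
  proof (rule sum.cong[OF refl])
    fix xs assume "xs \<in> X"
    then have d: "distinct (i # xs)" and s: "set (i # xs) \<subseteq> {1..n}" using i by (auto simp: X_def Ls_def)
    show "graph_prob q n (\<lambda>E. edges (i # xs) \<subseteq> E) = wt ?p (i # xs)"
      using gp_superset[OF edges_pairs[OF d s]] prod_edges[OF d] by simp
  qed
  also have "\<dots> = (\<Sum>xs\<in>Ls n m. if xs \<in> X then wt ?p (i # xs) else 0)"
    by (subst sum.inter_filter[symmetric]) (auto simp: finite_Ls X_def intro!: sum.cong)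
  also have "\<dots> \<le> WS n ?p m i j"
    unfolding WS_def
    by (intro sum_mono) (auto simp: X_def intro!: wt_nonneg q[THEN conjunct1])
  finally show ?thesis .
qed



lemma mu_value:
  assumes tau: "2 < tau" "tau < 3" and C: "C > 0"
  shows "mu tau C = C powr (alpha tau) * (tau - 1) / (tau - 2)"
proof -
  define a where "a = C powr (alpha tau)"
  have a0: "a > 0" using C by (simp add: a_def)
  have h1: "((\<lambda>x. 1 - paretoF tau C x) has_integral a) {0..a}"
  proof (rule has_integral_spike_finite[of "{a}"])
    show "((\<lambda>x. 1) has_integral a) {0..a}"
      using has_integral_const_real[of "1::real" 0 a] a0 by simp
    show "\<And>x. x \<in> {0..a} - {a} \<Longrightarrow> 1 - paretoF tau C x = 1"
      by (auto simp: paretoF_def a_def)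
  qed simp
  have "((\<lambda>x. x powr (-(tau - 1))) has_integral -(a powr (-(tau - 1) + 1)) / (-(tau - 1) + 1)) {a..}"
    by (rule has_integral_powr_to_inf) (use tau a0 in auto)
  then have "((\<lambda>x. C * x powr (-(tau - 1))) has_integral C * (-(a powr (-(tau - 1) + 1)) / (-(tau - 1) + 1))) {a..}"
    by (rule has_integral_mult_right)
  moreover have "C * (-(a powr (-(tau - 1) + 1)) / (-(tau - 1) + 1)) = C * (a powr (2 - tau)) / (tau - 2)"
      using tau by (simp add: field_simps)
  ultimately have "((\<lambda>x. C * x powr (-(tau - 1))) has_integral C * (a powr (2 - tau)) / (tau - 2)) {a..}"
    by simp
  then have h2: "((\<lambda>x. 1 - paretoF tau C x) has_integral C * (a powr (2 - tau)) / (tau - 2)) {a..}"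
    by (rule has_integral_eq[rotated]) (auto simp: paretoF_def a_def)
  have "((\<lambda>x. 1 - paretoF tau C x) has_integral (a + C * (a powr (2 - tau)) / (tau - 2))) ({0..a} \<union> {a..})"
    by (rule has_integral_Un[OF h1 h2]) (auto intro: negligible_subset[of "{a}"])
  also have "{0..a} \<union> {a..} = {0::real..}" using a0 by auto
  finally have "mu tau C = a + C * (a powr (2 - tau)) / (tau - 2)"
    unfolding mu_def by (rule integral_unique)
  also have "C * (a powr (2 - tau)) = C powr (1 + alpha tau * (2 - tau))"
    using C by (simp add: a_def powr_powr powr_add)
  also have "1 + alpha tau * (2 - tau) = alpha tau"
    using tau by (simp add: alpha_def field_simps)
  finally show ?thesis using tau by (simp add: a_def field_simps)
qed

lemma A_value:
  assumes tau: "2 < tau" "tau < 3"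
  shows "A_alpha (alpha tau) = Gamma (3 - tau) / (tau - 2)"
proof -
  define s where "s = tau - 2"
  have s: "0 < s" "s < 1" using tau by (auto simp: s_def)
  have ea: "1 / alpha tau = s + 1" using tau by (simp add: alpha_def s_def)
  define f where "f = (\<lambda>z::real. if z \<in> {0<..} then (1 - exp (- z)) * z powr (- (s + 1)) else 0)"
  have "(f has_integral (Gamma (1 - s) / s)) UNIV"
  proof (rule nn_integral_has_integral)
    show "f \<in> borel_measurable borel" unfolding f_def by measurable
    show "\<And>x. 0 \<le> f x" by (auto simp: f_def)
    show "0 \<le> Gamma (1 - s) / s" using s by auto
    have "(\<integral>\<^sup>+x. ennreal (f x) \<partial>lborel) = (\<integral>\<^sup>+z. ennreal (z powr (-(s+1)) * (1 - exp (- z))) * indicator {0<..} z \<partial>lborel)"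
      by (rule nn_integral_cong) (auto simp: f_def indicator_def mult.commute)
    also have "\<dots> = ennreal (Gamma (1 - s) / s)" by (rule A_formula[OF s])
    finally show "(\<integral>\<^sup>+x. ennreal (f x) \<partial>lborel) = ennreal (Gamma (1 - s) / s)" .
  qed
  then have "((\<lambda>z. (1 - exp (- z)) * z powr (- (s + 1))) has_integral (Gamma (1 - s) / s)) {0<..}"
    unfolding f_def by (subst has_integral_restrict_UNIV[symmetric]) simp
  then have "A_alpha (alpha tau) = Gamma (1 - s) / s"
    unfolding A_alpha_def ea by (rule integral_unique)
  then show ?thesis by (simp add: s_def)
qed

lemma Beta_p1:
  assumes "p > 0" shows "Beta p 1 = 1 / (p::real)"
proof -
  have "Gamma (p + 1) = p * Gamma p" by (rule Gamma_plus1) (use assms in \<open>auto elim!: nonpos_Ints_cases\<close>)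
  moreover have "Gamma p \<noteq> 0" using Gamma_real_pos[OF assms] by linarith
  ultimately show ?thesis using assms by (simp add: Beta_def)
qed

lemma Gamma_prod_bound:
  fixes p q :: real
  assumes p: "0 < p" "p < 1" and q: "0 < q" "q < 1"
  shows "Gamma p * Gamma q \<le> (1 / p + 1 / q) * Gamma (p + q)"
proof -
  have B1: "((\<lambda>t. t powr (p - 1) * (1 - t) powr (q - 1)) has_integral Beta p q) {0..1}"
    by (rule has_integral_Beta_real) (use p q in auto)
  have B2: "((\<lambda>t. t powr (p - 1) * (1 - t) powr (1 - 1)) has_integral Beta p 1) {0..1}"
    by (rule has_integral_Beta_real) (use p in auto)
  have B3: "((\<lambda>t. t powr (1 - 1) * (1 - t) powr (q - 1)) has_integral Beta 1 q) {0..1}"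
    by (rule has_integral_Beta_real) (use q in auto)
  have "Beta p q \<le> Beta p 1 + Beta 1 q"
  proof (rule has_integral_le[OF B1 has_integral_add[OF B2 B3]])
    fix t :: real assume t: "t \<in> {0..1}"
    show "t powr (p - 1) * (1 - t) powr (q - 1) \<le> t powr (p - 1) * (1 - t) powr (1 - 1) + t powr (1 - 1) * (1 - t) powr (q - 1)"
    proof (cases "t = 0 \<or> t = 1")
      case True then show ?thesis by auto
    next
      case False
      then have t': "0 < t" "t < 1" using t by auto
      define a where "a = t powr (p - 1)"
      define c where "c = (1 - t) powr (q - 1)"
      define u where "u = t powr (1 - p)"
      define v where "v = (1 - t) powr (1 - q)"
      have a: "a > 0" "a * u = 1" using t' by (simp_all add: a_def u_def powr_add[symmetric])
      have c: "c > 0" "c * v = 1" using t' by (simp_all add: c_def v_def powr_add[symmetric])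
      have "t powr 1 \<le> t powr (1 - p)" using t' p by (intro powr_mono') auto
      then have ut: "t \<le> u" using t' by (simp add: u_def)
      have "(1 - t) powr 1 \<le> (1 - t) powr (1 - q)" using t' q by (intro powr_mono') auto
      then have vt: "1 - t \<le> v" using t' by (simp add: v_def)
      have "a * c \<le> a * c * (u + v)" using mult_left_mono[of 1 "u+v" "a*c"] a c ut vt by simp
      also have "\<dots> = c * (a * u) + a * (c * v)" by (simp add: algebra_simps)
      also have "\<dots> = a + c" using a c by simp
      finally show ?thesis using t' by (simp add: a_def c_def)
    qed
  qed
  also have "Beta p 1 + Beta 1 q = 1 / p + 1 / q"
    using p q by (simp add: Beta_p1 Beta_commute[of 1 q])
  finally have Bb: "Beta p q \<le> 1 / p + 1 / q" .
  have "Gamma p * Gamma q = Beta p q * Gamma (p + q)"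
    by (rule Gamma_Gamma_Beta) (use p q in \<open>auto elim!: nonpos_Ints_cases\<close>)
  also have "\<dots> \<le> (1 / p + 1 / q) * Gamma (p + q)"
    using p q by (intro mult_right_mono Bb) auto
  finally show ?thesis .
qed

lemma Gamma_lower:
  fixes p :: real
  assumes p: "0 < p" "p \<le> 1/2"
  shows "Gamma p \<ge> 2 / 3"
proof -
  have "ennreal (exp (-1) / p) = (\<integral>\<^sup>+t. ennreal (t powr (-(1 - p))) * indicator {0<..<1} t \<partial>lborel) * ennreal (exp (-1))"
    using powr_from0_nn[of 1 "1 - p"] p by (simp add: ennreal_mult'[symmetric] field_simps)
  also have "\<dots> = (\<integral>\<^sup>+t. ennreal (t powr (-(1 - p))) * indicator {0<..<1} t * ennreal (exp (-1)) \<partial>lborel)"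
    by (rule nn_integral_multc[symmetric]) measurable
  also have "\<dots> \<le> (\<integral>\<^sup>+t. ennreal (t powr (p - 1) * exp (- t)) * indicator {0<..} t \<partial>lborel)"
  proof (rule nn_integral_mono)
    fix t :: real
    show "ennreal (t powr (-(1 - p))) * indicator {0<..<1} t * ennreal (exp (-1)) \<le> ennreal (t powr (p - 1) * exp (- t)) * indicator {0<..} t"
    proof (cases "0 < t \<and> t < 1")
      case True
      then have "exp (-1) \<le> exp (- t)" by simp
      then have "t powr (p - 1) * exp (-1) \<le> t powr (p - 1) * exp (- t)" by (intro mult_left_mono) auto
      then show ?thesis using True by (simp add: indicator_def ennreal_mult'[symmetric] ennreal_leI)
    qed (auto simp: indicator_def)
  qed
  also have "\<dots> = ennreal (Gamma p)" by (rule gamma_nn[OF p(1)])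
  finally have "exp (-1) / p \<le> Gamma p" using p by (subst (asm) ennreal_le_iff) auto
  moreover have "2 / 3 \<le> exp (-1) / p"
  proof -
    have "inverse (3::real) \<le> inverse (exp 1)" by (rule le_imp_inverse_le[OF exp_le]) simp
    then have "exp (-1::real) \<ge> 1 / 3" by (simp add: exp_minus inverse_eq_divide)
    then show ?thesis using p by (simp add: field_simps)
  qed
  ultimately show ?thesis by linarith
qed



lemma powr_diff_le:
  fixes x be :: real
  assumes x: "x > 0" and be: "0 < be" "be < 1"
  shows "(x + 1) powr be - x powr be \<le> be * x powr (be - 1)"
proof -
  have "\<exists>z. x < z \<and> z < x + 1 \<and> (x + 1) powr be - x powr be = (x + 1 - x) * (be * z powr (be - 1))"
    by (rule MVT2) (use x in \<open>auto intro!: has_real_derivative_powr\<close>)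
  then obtain z where z: "x < z" "z < x + 1" "(x + 1) powr be - x powr be = (x + 1 - x) * (be * z powr (be - 1))"
    by blast
  have "z powr (be - 1) \<le> x powr (be - 1)" using z x be by (intro powr_mono2') auto
  then show ?thesis using z be by simp
qed

lemma sum_powr_lower:
  fixes al :: real
  assumes al: "0 < al" "al < 1"
  shows "(\<Sum>i\<in>{1..n}. real i powr (- al)) \<ge> ((real n + 1) powr (1 - al) - 1) / (1 - al)"
proof (induction n)
  case 0 then show ?case by simp
next
  case (Suc n)
  have "(real n + 1 + 1) powr (1 - al) - (real n + 1) powr (1 - al) \<le> (1 - al) * (real n + 1) powr (1 - al - 1)"
    by (rule powr_diff_le) (use al in auto)
  then have "((real n + 1 + 1) powr (1 - al) - (real n + 1) powr (1 - al)) / (1 - al) \<le> (real n + 1) powr (- al)"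
    using al by (simp add: divide_le_eq mult.commute)
  moreover have "(\<Sum>i\<in>{1..Suc n}. real i powr (- al)) = (\<Sum>i\<in>{1..n}. real i powr (- al)) + (real n + 1) powr (- al)"
    by (simp add: add.commute)
  moreover have "((real (Suc n) + 1) powr (1 - al) - 1) / (1 - al)
     = ((real n + 1) powr (1 - al) - 1) / (1 - al) + ((real n + 1 + 1) powr (1 - al) - (real n + 1) powr (1 - al)) / (1 - al)"
    by (simp add: diff_divide_distrib add.commute)
  ultimately show ?case using Suc.IH by linarith
qed

lemma ell_lower:
  assumes tau: "2 < tau" "tau < 3" and C: "C > 0" and n: "n \<ge> 1"
  shows "ell tau C n \<ge> mu tau C * (real n - real n powr (alpha tau))"
proof -
  let ?a = "alpha tau"
  have a: "1/2 < ?a" "?a < 1" using tau by (auto simp: alpha_def field_simps)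
  have "ell tau C n = cF tau C * real n powr ?a * (\<Sum>i\<in>{1..n}. real i powr (- ?a))"
    by (simp add: ell_def weight_def sum_distrib_left)
  also have "\<dots> \<ge> cF tau C * real n powr ?a * (((real n + 1) powr (1 - ?a) - 1) / (1 - ?a))"
    using sum_powr_lower[of ?a n] a C by (intro mult_left_mono) (auto simp: cF_def)
  finally have 1: "ell tau C n \<ge> cF tau C * real n powr ?a * (((real n + 1) powr (1 - ?a) - 1) / (1 - ?a))" .
  have "real n powr (1 - ?a) \<le> (real n + 1) powr (1 - ?a)" using a by (intro powr_mono2) auto
  then have "cF tau C * real n powr ?a * ((real n powr (1 - ?a) - 1) / (1 - ?a))
       \<le> cF tau C * real n powr ?a * (((real n + 1) powr (1 - ?a) - 1) / (1 - ?a))"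
    using a C by (intro mult_left_mono divide_right_mono) (auto simp: cF_def)
  also have "cF tau C * real n powr ?a * ((real n powr (1 - ?a) - 1) / (1 - ?a))
       = cF tau C / (1 - ?a) * (real n powr ?a * real n powr (1 - ?a) - real n powr ?a)"
    using a by (simp add: field_simps)
  also have "real n powr ?a * real n powr (1 - ?a) = real n"
    using n by (simp add: powr_add[symmetric])
  also have "cF tau C / (1 - ?a) = mu tau C"
    using tau C by (simp add: mu_value cF_def alpha_def field_simps)
  finally show ?thesis using 1 by linarith
qed



lemma exists_b:
  fixes tau eps :: real
  assumes tau: "2 < tau" "tau < 3" and eps: "eps > 0"
  shows "\<exists>b. 1/2 < b \<and> b < alpha tau \<and> b \<le> 3/5 \<and>
     (1 / (1 - b / alpha tau) + 1 / (1 - (1 - b) / alpha tau)) / (b * (1 - b)) \<le> (1 + eps) * (16 / (3 - tau))"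
proof -
  let ?a = "alpha tau"
  have a: "1/2 < ?a" "?a < 1" using tau by (auto simp: alpha_def field_simps)
  define phi where "phi = (\<lambda>b. (1 / (1 - b / ?a) + 1 / (1 - (1 - b) / ?a)) / (b * (1 - b)))"
  have h: "1 - (1/2) / ?a = (3 - tau) / 2" using tau by (simp add: alpha_def field_simps)
  have h2: "1 - (1 - 1/2) / ?a = (3 - tau) / 2" using tau by (simp add: alpha_def field_simps)
  have "phi (1/2) = (1 / ((3 - tau) / 2) + 1 / ((3 - tau) / 2)) / ((1/2) * (1 - 1/2))"
    unfolding phi_def h h2 ..
  also have "\<dots> = 16 / (3 - tau)"
  proof -
    have "\<And>x::real. x > 0 \<Longrightarrow> (1 / (x / 2) + 1 / (x / 2)) / ((1/2) * (1 - 1/2)) = 16 / x"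
      by (simp add: field_simps)
    then show ?thesis using tau by simp
  qed
  finally have phi12: "phi (1/2) = 16 / (3 - tau)" .
  have "isCont phi (1/2)"
    unfolding phi_def using tau h h2 a by (intro continuous_intros) auto
  then have "(phi \<longlongrightarrow> phi (1/2)) (at (1/2))" by (simp add: isCont_def)
  moreover have "phi (1/2) < (1 + eps) * (16 / (3 - tau))"
  proof -
    define P where "P = 16 / (3 - tau)"
    have "0 < P" using tau by (simp add: P_def)
    then have "0 < eps * P" using eps by simp
    moreover have "(1 + eps) * P = P + eps * P" by (simp add: algebra_simps)
    ultimately show ?thesis using phi12 unfolding P_def[symmetric] by linarith
  qed
  ultimately have "eventually (\<lambda>b. phi b < (1 + eps) * (16 / (3 - tau))) (at (1/2))"
    by (rule order_tendstoD(2))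
  then obtain d where d: "d > 0" "\<And>b. b \<noteq> 1/2 \<Longrightarrow> dist b (1/2) < d \<Longrightarrow> phi b < (1 + eps) * (16 / (3 - tau))"
    unfolding eventually_at by auto
  define b where "b = 1/2 + min d (min (?a - 1/2) (1/10)) / 2"
  have m: "min d (min (?a - 1/2) (1/10)) > 0" using d a by auto
  have m2: "min d (min (?a - 1/2) (1/10)) \<le> ?a - 1/2" "min d (min (?a - 1/2) (1/10)) \<le> 1/10"
    "min d (min (?a - 1/2) (1/10)) \<le> d"
    by (rule order_trans[OF min.cobounded2 min.cobounded1], rule order_trans[OF min.cobounded2 min.cobounded2],
        rule min.cobounded1)
  have "1/2 < b" using m by (simp add: b_def)
  moreover have "b < ?a" using m m2 a unfolding b_def by linarith
  moreover have "b \<le> 3/5" using m m2 unfolding b_def by linarith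
  moreover have "phi b < (1 + eps) * (16 / (3 - tau))"
    by (rule d(2)) (use m m2 in \<open>auto simp: b_def dist_real_def\<close>)
  ultimately show ?thesis unfolding phi_def by (intro exI[of _ b]) auto
qed



lemma inv_powr_prod:
  fixes x y b :: real assumes "x > 0" "y > 0"
  shows "A / (x powr (1 - b) * y powr b) = A * (x powr (b - 1) * y powr (- b))"
proof -
  have "x powr (b - 1) = inverse (x powr (1 - b))" using assms by (simp add: powr_minus[symmetric])
  moreover have "y powr (- b) = inverse (y powr b)" using assms by (simp add: powr_minus)
  ultimately show ?thesis by (simp add: divide_inverse mult_ac)
qed

lemma edge_prob_eq:
  fixes tau C pi :: real and n a c :: nat
  assumes a: "a \<ge> 1" and c: "c \<ge> 1"
  defines "ka \<equiv> cF tau C * cF tau C * (real n powr alpha tau * real n powr alpha tau) / ell tau C n"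
  shows "edge_prob tau C pi n (min a c, max a c) = pi * gk ka (alpha tau) (real a * real c)"
proof -
  have "weight tau C n (min a c) * weight tau C n (max a c)
      = cF tau C * cF tau C * (real n powr alpha tau * real n powr alpha tau) * (real (min a c) powr (- alpha tau) * real (max a c) powr (- alpha tau))"
    by (simp add: weight_def mult_ac)
  also have "real (min a c) powr (- alpha tau) * real (max a c) powr (- alpha tau) = (real a * real c) powr (- alpha tau)"
    using a c by (simp add: powr_mult[symmetric] min_def max_def mult.commute)
  finally have w: "weight tau C n (min a c) * weight tau C n (max a c) / ell tau C n = ka * (real a * real c) powr (- alpha tau)"
    by (simp add: ka_def)
  show ?thesis
    unfolding edge_prob_def gk_def using w by (simp add: minus_divide_left[symmetric])
qed



lemma main_bound:
  fixes tau C eps lam b theta :: real and n k i j :: nat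
  assumes tau: "2 < tau" "tau < 3" and C: "0 < C" and eps: "0 < eps" and lam: "0 < lam" "lam < lambda_c tau C"
    and b: "1/2 < b" "b < alpha tau" "b \<le> 3/5"
    and phib: "(1 / (1 - b / alpha tau) + 1 / (1 - (1 - b) / alpha tau)) / (b * (1 - b)) \<le> (1 + eps) * (16 / (3 - tau))"
    and th: "theta > 0" "(1 + theta)^2 = 1 + eps"
    and n: "n \<ge> 1" "real n powr (alpha tau - 1) \<le> theta / (1 + theta)" "lam * real n powr (- eta_s tau) \<le> 1"
    and k: "k \<ge> 1" and ij: "i \<in> {1..n}" "j \<in> {1..n}" "i \<noteq> j"
  shows "path_prob tau C lam n (2 * k) i j \<le> (1 + eps) ^ (2 * k) * (lam / lambda_c tau C) ^ (2 * k)
            / (real (min i j) powr (1 - b) * real (max i j) powr b)"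
proof -
  define al where "al = alpha tau"
  have al: "1/2 < al" "al < 1" "al > 0" using tau by (auto simp: al_def alpha_def field_simps)
  have b': "0 < b" "b < 1" "1 - b < al" "b < al" using b al by (auto simp: al_def)
  define pr where "pr = lam * real n powr (- eta_s tau)"
  have pr: "0 \<le> pr" "pr \<le> 1" using lam n by (auto simp: pr_def)
  define cf where "cf = cF tau C"
  have cf: "cf > 0" using C by (simp add: cf_def cF_def)
  define l where "l = ell tau C n"
  have w0: "weight tau C n x \<ge> 0" for x using cf by (simp add: weight_def cf_def)
  have l0: "l > 0"
    unfolding l_def ell_def using n cf by (intro sum_pos) (auto simp: weight_def cf_def)
  define ka where "ka = cf * cf * (real n powr al * real n powr al) / l"
  have ka: "ka > 0" using cf l0 n by (simp add: ka_def)
  define q where "q = edge_prob tau C pr n"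
  have q01: "0 \<le> q e \<and> q e \<le> 1" for e
  proof -
    have x0: "0 \<le> weight tau C n (fst e) * weight tau C n (snd e) / l"
      using w0 l0 by simp
    have "q e = pr * (1 - exp (- weight tau C n (fst e) * weight tau C n (snd e) / l))"
      by (simp only: q_def edge_prob_def l_def)
    also have "- weight tau C n (fst e) * weight tau C n (snd e) / l = - (weight tau C n (fst e) * weight tau C n (snd e) / l)"
      by simp
    finally have "q e = pr * (1 - exp (- (weight tau C n (fst e) * weight tau C n (snd e) / l)))" .
    moreover have "0 \<le> 1 - exp (- (weight tau C n (fst e) * weight tau C n (snd e) / l))"
      using x0 by simp
    moreover have "1 - exp (- (weight tau C n (fst e) * weight tau C n (snd e) / l)) \<le> 1" by simp
    ultimately show ?thesis using pr by (auto intro: mult_le_one)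
  qed
  define p where "p = (\<lambda>a c. q (min a c, max a c))"
  have pp: "0 \<le> p a c \<and> p a c \<le> pr * gk ka al (real a * real c)" if "a \<in> {1..n}" "c \<in> {1..n}" for a c
  proof -
    have "p a c = pr * gk ka al (real a * real c)"
      unfolding p_def q_def using edge_prob_eq[of a c tau C pr n] that
      by (simp add: ka_def al_def cf_def l_def)
    moreover have "0 \<le> p a c" using q01 by (simp add: p_def)
    ultimately show ?thesis by simp
  qed
  have step1: "path_prob tau C lam n (2 * k) i j \<le> WS n p (2 * k) i j"
    unfolding path_prob_def p_def q_def[symmetric] pr_def[symmetric]
    by (rule path_prob_le_WS[OF q01 ij(1)]) (use k in auto)
  obtain k' where k': "k = Suc k'" using k by (cases k) auto
  define C0 where "C0 = pr^2 * ka powr (b / al) * Ik ka al b"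
  define Mp where "Mp = pr^2 * Ik ka al b * Ik ka al (1 - b)"
  have WSb: "WS n p (2 * k) i j \<le> C0 * Mp ^ k' * (real i powr (-b) * real j powr (b - 1))"
            "WS n p (2 * k) i j \<le> C0 * Mp ^ k' * (real i powr (b - 1) * real j powr (-b))"
  proof -
    have "\<forall>i\<in>{1..n}. \<forall>j\<in>{1..n}.
           WS n p (2 * Suc k') i j \<le> C0 * Mp ^ k' * (real i powr (-b) * real j powr (b - 1))
         \<and> WS n p (2 * Suc k') i j \<le> C0 * Mp ^ k' * (real i powr (b - 1) * real j powr (-b))"
      unfolding C0_def Mp_def by (rule WS_bound[OF pp pr(1) ka al(3) b'])
    then show "WS n p (2 * k) i j \<le> C0 * Mp ^ k' * (real i powr (-b) * real j powr (b - 1))"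
            "WS n p (2 * k) i j \<le> C0 * Mp ^ k' * (real i powr (b - 1) * real j powr (-b))"
      using ij unfolding k' by auto
  qed
  define p' where "p' = 1 - b / al"
  define q' where "q' = 1 - (1 - b) / al"
  have p': "0 < p'" "p' < 1" "p' \<le> 1/2" using b' b(1) al by (auto simp: p'_def field_simps)
  have q': "0 < q'" "q' < 1" using b' al by (auto simp: q'_def field_simps)
  have pq: "p' + q' = 3 - tau" using tau by (simp add: p'_def q'_def al_def alpha_def field_simps)
  have Ikb: "Ik ka al b = ka powr ((1 - b) / al) * Gamma q' / (1 - b)" by (simp add: Ik_def q'_def)
  have Ik1b: "Ik ka al (1 - b) = ka powr (b / al) * Gamma p' / b" by (simp add: Ik_def p'_def)
  have kapow: "ka powr ((1 - b) / al) * ka powr (b / al) = ka powr (1 / al)"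
    by (simp add: powr_add[symmetric] add_divide_distrib[symmetric])
  have Mp_eq: "Mp = pr^2 * ka powr (1 / al) * (Gamma p' * Gamma q') / (b * (1 - b))"
    unfolding Mp_def Ikb Ik1b kapow[symmetric] by (simp add: field_simps)
  have C0_eq: "C0 = pr^2 * ka powr (1 / al) * Gamma q' / (1 - b)"
    unfolding C0_def Ikb kapow[symmetric] by (simp add: field_simps)
  have Gp: "Gamma p' \<ge> b" using Gamma_lower[OF p'(1) p'(3)] b by linarith
  have C0_le: "C0 \<le> Mp"
  proof -
    have X: "0 \<le> pr^2 * ka powr (1 / al) * Gamma q' / (1 - b)" using b' q' by auto
    have "C0 = pr^2 * ka powr (1 / al) * Gamma q' / (1 - b) * 1" by (simp add: C0_eq)
    also have "\<dots> \<le> pr^2 * ka powr (1 / al) * Gamma q' / (1 - b) * (Gamma p' / b)"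
      using Gp b' X by (intro mult_left_mono) auto
    also have "\<dots> = Mp" by (simp add: Mp_eq field_simps)
    finally show ?thesis .
  qed
  have Mp0: "Mp \<ge> 0" using b' p' q' by (simp add: Mp_eq)
  have C00: "C0 \<ge> 0" using b' q' by (simp add: C0_eq)

  define Kn where "Kn = cf * cf * real n / l"
  have Kn0: "Kn > 0" using cf l0 n by (simp add: Kn_def)
  have npos: "real n > 0" using n by simp
  have nal: "real n powr al * real n powr al = real n * real n powr (2 * al - 1)"
  proof -
    have "real n powr al * real n powr al = real n powr (al + al)"
      by (simp only: powr_add)
    also have "al + al = 1 + (2 * al - 1)" by simp
    also have "real n powr (1 + (2 * al - 1)) = real n * real n powr (2 * al - 1)"
      using npos by (subst powr_add) simp
    finally show ?thesis .
  qed
  have ka_Kn: "ka = Kn * real n powr (2 * al - 1)" by (simp add: ka_def Kn_def nal)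
  have e2: "(2 * al - 1) / al = 2 * eta_s tau" using tau by (simp add: al_def alpha_def eta_s_def field_simps)
  have pika: "pr^2 * ka powr (1 / al) = lam^2 * Kn powr (1 / al)"
  proof -
    have "ka powr (1 / al) = Kn powr (1 / al) * real n powr (2 * eta_s tau)"
      unfolding ka_Kn using Kn0 npos by (simp add: powr_mult powr_powr e2[symmetric])
    moreover have "pr^2 = lam^2 * real n powr (- (2 * eta_s tau))"
      by (simp add: pr_def power2_eq_square powr_add[symmetric] mult_ac)
    ultimately have "pr^2 * ka powr (1 / al) = lam^2 * Kn powr (1 / al) * (real n powr (- (2 * eta_s tau)) * real n powr (2 * eta_s tau))"
      by (simp add: mult_ac)
    also have "real n powr (- (2 * eta_s tau)) * real n powr (2 * eta_s tau) = 1"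
      using npos by (simp add: powr_add[symmetric])
    finally show ?thesis by simp
  qed
  define mu' where "mu' = mu tau C"
  have mu'_eq: "mu' = cf / (1 - al)"
    using tau C by (simp add: mu'_def mu_value cf_def cF_def al_def alpha_def field_simps)
  have mu'0: "mu' > 0" using mu'_eq cf al by simp
  have lge: "l \<ge> mu' * (real n - real n powr al)"
    using ell_lower[OF tau C n(1)] by (simp add: l_def mu'_def al_def)
  have "real n powr al = real n powr (1 + (al - 1))" by simp
  also have "\<dots> = real n * real n powr (al - 1)"
    using npos by (subst powr_add) simp
  also have "\<dots> \<le> real n * (theta / (1 + theta))"
    using n(2) npos by (intro mult_left_mono) (auto simp: al_def)
  finally have "real n - real n powr al \<ge> real n / (1 + theta)"
    using th(1) by (simp add: field_simps)
  then have lge2: "l \<ge> mu' * real n / (1 + theta)"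
    using lge mu'0 by (smt (verit) mult_left_mono times_divide_eq_right)
  define K where "K = cf * cf / mu'"
  have K0: "K > 0" using cf mu'0 by (simp add: K_def)
  have Kn_le: "Kn \<le> (1 + theta) * K"
  proof -
    have pos: "0 < mu' * real n / (1 + theta)" using mu'0 npos th(1) by simp
    have "Kn = cf * cf * real n / l" by (simp add: Kn_def)
    also have "\<dots> \<le> cf * cf * real n / (mu' * real n / (1 + theta))"
      using lge2 pos cf npos l0 mu'0 th(1) by (intro divide_left_mono) auto
    also have "\<dots> = (1 + theta) * K" using npos mu'0 th(1) by (simp add: K_def field_simps)
    finally show ?thesis .
  qed
  define Kp where "Kp = K powr (1 / al)"
  have Kp0: "Kp > 0" using K0 by (simp add: Kp_def)
  have Knp: "Kn powr (1 / al) \<le> (1 + eps) * Kp"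
  proof -
    have "Kn powr (1 / al) \<le> ((1 + theta) * K) powr (1 / al)"
      using Kn_le Kn0 al by (intro powr_mono2) auto
    also have "\<dots> = (1 + theta) powr (1 / al) * Kp"
      using th(1) K0 by (simp add: powr_mult Kp_def)
    also have "(1 + theta) powr (1 / al) \<le> (1 + theta) powr 2"
      using th(1) al by (intro powr_mono) (auto simp: field_simps)
    also have "(1 + theta) powr 2 = 1 + eps"
      using th by (simp add: powr_numeral)
    finally show ?thesis using Kp0 by (simp add: mult_right_mono)
  qed
  define G where "G = Gamma (3 - tau)"
  have G0: "G > 0" using tau by (simp add: G_def)
  have Gpq: "Gamma p' * Gamma q' \<le> (1 / p' + 1 / q') * G"
    using Gamma_prod_bound[OF p'(1,2) q'] pq by (simp add: G_def)
  have phi': "(1 / p' + 1 / q') / (b * (1 - b)) \<le> (1 + eps) * (16 / (3 - tau))"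
    using phib by (simp add: p'_def q'_def al_def)
  have bb: "b * (1 - b) > 0" using b' by simp
  have Mp_le1: "Mp \<le> lam^2 * (1 + eps)^2 * Kp * G * (16 / (3 - tau))"
  proof -
    have "Mp = lam^2 * Kn powr (1 / al) * (Gamma p' * Gamma q') / (b * (1 - b))"
      by (simp add: Mp_eq pika)
    also have "\<dots> \<le> lam^2 * ((1 + eps) * Kp) * ((1 / p' + 1 / q') * G) / (b * (1 - b))"
    proof -
      have h1: "lam^2 * Kn powr (1 / al) \<le> lam^2 * ((1 + eps) * Kp)" by (intro mult_left_mono Knp) simp
      have h2: "lam^2 * Kn powr (1 / al) * (Gamma p' * Gamma q') \<le> lam^2 * ((1 + eps) * Kp) * ((1 / p' + 1 / q') * G)"
        by (rule mult_mono[OF h1 Gpq]) (use eps Kp0 p' q' in auto)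
      show ?thesis by (rule divide_right_mono[OF h2]) (use bb in simp)
    qed
    also have "\<dots> = lam^2 * (1 + eps) * Kp * G * ((1 / p' + 1 / q') / (b * (1 - b)))"
      by (simp add: field_simps)
    also have "\<dots> \<le> lam^2 * (1 + eps) * Kp * G * ((1 + eps) * (16 / (3 - tau)))"
      using phi' Kp0 G0 eps by (intro mult_left_mono) auto
    also have "\<dots> = lam^2 * (1 + eps)^2 * Kp * G * (16 / (3 - tau))"
      by (simp add: power2_eq_square mult_ac)
    finally show ?thesis .
  qed
  have A_eq: "A_alpha (alpha tau) = G / (tau - 2)" using A_value[OF tau] by (simp add: G_def)
  have B_eq: "B_alpha tau C = Kp * G / ((tau - 2) * al)"
  proof -
    have "Kp = cf powr (2 / al) / mu' powr (1 / al)"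
      unfolding Kp_def K_def using cf mu'0
      by (simp add: powr_divide powr_mult powr_add[symmetric])
    moreover have "B_alpha tau C = cf powr (2 / al) * (G / (tau - 2)) / (al * mu' powr (1 / al))"
      by (simp add: B_alpha_def A_eq cf_def mu'_def al_def)
    ultimately show ?thesis by (simp add: divide_inverse mult_ac inverse_mult_distrib)
  qed
  have B0: "B_alpha tau C > 0" using Kp0 G0 tau al by (simp add: B_eq)
  have eta0: "eta tau > 0" using tau by (simp add: eta_def)
  have lc2: "(lambda_c tau C)^2 = eta tau / (4 * B_alpha tau C)"
    unfolding lambda_c_def using eta0 B0 by simp
  define T where "T = (1 + eps)^2 * (lam / lambda_c tau C)^2"
  have T_eq: "T = lam^2 * (1 + eps)^2 * Kp * G * (4 / ((tau - 2) * al * eta tau))"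
    unfolding T_def power_divide lc2 B_eq using eta0 tau al by (simp add: field_simps)
  have key: "16 / (3 - tau) \<le> 4 / ((tau - 2) * al * eta tau)"
  proof -
    have ae: "(tau - 2) * al * eta tau = (tau - 2) * (3 - tau) / (tau - 1)^2"
      using tau by (simp add: al_def alpha_def eta_def power2_eq_square)
    have x: "(tau - 2) * (3 - tau) > 0" using tau by simp
    have "16 / (3 - tau) = (tau - 2) * 16 / ((tau - 2) * (3 - tau))"
      by (rule nonzero_mult_divide_mult_cancel_left[symmetric]) (use tau in simp)
    also have "\<dots> \<le> 4 * (tau - 1)^2 / ((tau - 2) * (3 - tau))"
    proof (rule divide_right_mono)
      have "4 * (tau - 1)^2 - 16 * (tau - 2) = 4 * (tau - 3)^2" by (simp add: power2_eq_square algebra_simps)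
      moreover have "0 \<le> 4 * (tau - 3)^2" by simp
      ultimately show "(tau - 2) * 16 \<le> 4 * (tau - 1)^2" by linarith
    qed (use x in simp)
    also have "\<dots> = 4 / ((tau - 2) * al * eta tau)" unfolding ae using tau by simp
    finally show ?thesis .
  qed
  have Mp_le: "Mp \<le> T"
  proof -
    have nn: "0 \<le> lam^2 * (1 + eps)^2 * Kp * G" using Kp0 G0 by simp
    have "lam^2 * (1 + eps)^2 * Kp * G * (16 / (3 - tau)) \<le> lam^2 * (1 + eps)^2 * Kp * G * (4 / ((tau - 2) * al * eta tau))"
      by (rule mult_left_mono[OF key nn])
    then show ?thesis using Mp_le1 T_eq by linarith
  qed
  have CM: "C0 * Mp ^ k' \<le> T ^ k"
  proof -
    have "C0 * Mp ^ k' \<le> T * T ^ k'"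
      using C0_le Mp_le Mp0 C00 by (intro mult_mono power_mono) auto
    then show ?thesis by (simp add: k')
  qed
  have Tk: "T ^ k = (1 + eps) ^ (2 * k) * (lam / lambda_c tau C) ^ (2 * k)"
    unfolding T_def by (simp add: power_mult_distrib power_mult)
  have ipos: "real i > 0" "real j > 0" using ij by auto
  show ?thesis
  proof (cases "i < j")
    case True
    have "path_prob tau C lam n (2 * k) i j \<le> C0 * Mp ^ k' * (real i powr (b - 1) * real j powr (-b))"
      using step1 WSb(2) by linarith
    also have "\<dots> \<le> T ^ k * (real i powr (b - 1) * real j powr (-b))"
      using CM by (intro mult_right_mono) auto
    finally show ?thesis using True ipos
      by (simp add: inv_powr_prod Tk min_def max_def)
  next
    case False
    then have ji: "j < i" using ij(3) by simp
    have "path_prob tau C lam n (2 * k) i j \<le> C0 * Mp ^ k' * (real i powr (-b) * real j powr (b - 1))"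
      using step1 WSb(1) by linarith
    also have "\<dots> \<le> T ^ k * (real j powr (b - 1) * real i powr (-b))"
      using CM by (simp add: mult.commute[of "real i powr (-b)"]) (intro mult_right_mono, auto)
    finally show ?thesis using ji ipos
      by (simp add: inv_powr_prod Tk min_def max_def)
  qed
qed



theorem proposition3p10:
  fixes tau C eps lam :: real
  assumes "2 < tau" "tau < 3" "0 < C" "0 < eps" "0 < lam" "lam < lambda_c tau C"
  shows "\<exists>n0::nat. n0 \<ge> 1 \<and> (\<exists>b::real. 1/2 < b \<and> b < alpha tau \<and>
           (\<forall>n\<ge>n0. \<forall>k::nat\<ge>1. \<forall>i\<in>{1..n}. \<forall>j\<in>{1..n}. i \<noteq> j \<longrightarrow>
              path_prob tau C lam n (2 * k) i j
                \<le> (1 + eps) ^ (2 * k) * (lam / lambda_c tau C) ^ (2 * k)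
                   / (real (min i j) powr (1 - b) * real (max i j) powr b)))"
proof -
  note tau = assms(1,2) and C = assms(3) and eps = assms(4) and lam = assms(5,6)
  obtain b where b: "1/2 < b" "b < alpha tau" "b \<le> 3/5"
    and phib: "(1 / (1 - b / alpha tau) + 1 / (1 - (1 - b) / alpha tau)) / (b * (1 - b)) \<le> (1 + eps) * (16 / (3 - tau))"
    using exists_b[OF tau eps] by blast
  define theta where "theta = sqrt (1 + eps) - 1"
  have th: "theta > 0" "(1 + theta)^2 = 1 + eps" using eps by (auto simp: theta_def)
  have al: "alpha tau < 1" using tau by (simp add: alpha_def field_simps)
  have es: "eta_s tau > 0" using tau by (simp add: eta_s_def)
  have ev1: "eventually (\<lambda>n. real n powr (alpha tau - 1) < theta / (1 + theta)) sequentially"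
  proof (rule order_tendstoD(2))
    show "((\<lambda>n. real n powr (alpha tau - 1)) \<longlongrightarrow> 0) sequentially"
      by (rule tendsto_neg_powr[OF _ filterlim_real_sequentially]) (use al in simp)
    show "0 < theta / (1 + theta)" using th by simp
  qed
  have ev2: "eventually (\<lambda>n. lam * real n powr (- eta_s tau) < 1) sequentially"
  proof (rule order_tendstoD(2))
    have "((\<lambda>n. real n powr (- eta_s tau)) \<longlongrightarrow> 0) sequentially"
      by (rule tendsto_neg_powr[OF _ filterlim_real_sequentially]) (use es in simp)
    then show "((\<lambda>n. lam * real n powr (- eta_s tau)) \<longlongrightarrow> 0) sequentially"
      using tendsto_mult_left[of _ 0 sequentially lam] by simp
  qed simp
  have ev3: "eventually (\<lambda>n. n \<ge> (1::nat)) sequentially" by (rule eventually_ge_at_top)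
  obtain N where N: "\<And>n. n \<ge> N \<Longrightarrow> real n powr (alpha tau - 1) < theta / (1 + theta)
      \<and> lam * real n powr (- eta_s tau) < 1 \<and> n \<ge> 1"
    using eventually_conj[OF ev1 eventually_conj[OF ev2 ev3]] unfolding eventually_sequentially by blast
  show ?thesis
  proof (intro exI[of _ "max N 1"] conjI exI[of _ b] allI impI ballI)
    show "1 \<le> max N 1" by simp
    show "1/2 < b" "b < alpha tau" using b by auto
    fix n k i j :: nat assume n: "max N 1 \<le> n" and k: "1 \<le> k" and i: "i \<in> {1..n}" and j: "j \<in> {1..n}" and ij: "i \<noteq> j"
    have Nn: "n \<ge> N" using n by simp
    show "path_prob tau C lam n (2 * k) i j
                \<le> (1 + eps) ^ (2 * k) * (lam / lambda_c tau C) ^ (2 * k)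
                   / (real (min i j) powr (1 - b) * real (max i j) powr b)"
      by (rule main_bound[OF tau C eps lam b phib th]) (use N[OF Nn] k i j ij in auto)
  qed
qed

end
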